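(* Let $G$ be a finite undirected graph and $u\in V(G)$ such that all vertices in $N(u)$ are pairwise adjacent. Then \[\mathrm{Ind}(G)\simeq\bigvee_{v\in N(u)}\mathrm{susp}\,\mathrm{Ind}(G\setminus(N(u)\cup N(v))).\] Moreover, suppose that for each $v\in N(u)$ with $G\setminus(N(u)\cup N(v))\neq\emptyset$, $\mathcal{G}_v$ is a set of generating faces of $\mathrm{Ind}(G\setminus(N(u)\cup N(v)))$. Then the union of \[\bigcup_{v\in N(u),\ G\setminus(N(u)\cup N(v))=\emptyset}\{\{v\}\}\quad\text{and}\quad\bigcup_{v\in N(u),\ G\setminus(N(u)\cup N(v))\neq\emptyset}\{\{v\}\cup\sigma\mid\sigma\in\mathcal{G}_v\}\] is a set of generating faces of $\mathrm{Ind}(G)$.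
   Context: $N(v)$ is the set of vertices adjacent to $v$. $\mathrm{Ind}(H)$ is the simplicial complex with vertex set $V(H)$ whose simplices are the independent sets of $H$; $H\setminus W$ is the induced subgraph on $V(H)\setminus W$; for the empty graph, $\mathrm{Ind}$ is the empty complex. Conventions: $\mathrm{susp}(\emptyset)=S^0$ and a wedge over an empty index set is a point. A set $\mathcal{G}$ of maximal faces of a simplicial complex $\Delta$ is a set of generating faces if the complex $\Delta\setminus\mathcal{G}$ obtained by removing the faces in $\mathcal{G}$ (i.e. removing their interiors) is contractible. *)

theory Defs
  imports "HOL-Analysis.Analysis"
begin

text \<open>Abstract simplicial complexes are represented as sets of (finite) vertex sets.\<close>

definition realization :: "'v set set \<Rightarrow> ('v \<Rightarrow> real) set" where
  "realization K = {f. (\<exists>\<sigma>\<in>K. finite \<sigma> \<and> {x. f x \<noteq> 0} \<subseteq> \<sigma>) \<and> (\<forall>x. 0 \<le> f x)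
                       \<and> sum f {x. f x \<noteq> 0} = 1}"

definition geom :: "'v set set \<Rightarrow> ('v \<Rightarrow> real) topology" where
  "geom K = top_of_set (realization K)"

definition contractible_cx :: "'v set set \<Rightarrow> bool" where
  "contractible_cx K \<longleftrightarrow> realization K \<noteq> {} \<and> contractible_space (geom K)"

definition maximal_faces :: "'v set set \<Rightarrow> 'v set set" where
  "maximal_faces K = {\<sigma>\<in>K. \<forall>\<tau>\<in>K. \<sigma> \<subseteq> \<tau> \<longrightarrow> \<tau> = \<sigma>}"

text \<open>Removing (the interiors of) a set of maximal faces leaves the subcomplex K - GF.\<close>
definition generating_faces :: "'v set set \<Rightarrow> 'v set set \<Rightarrow> bool" where
  "generating_faces K GF \<longleftrightarrow> GF \<subseteq> maximal_faces K \<and> contractible_cx (K - GF)"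

definition susp_cx :: "'v set set \<Rightarrow> ('v + bool) set set" where
  "susp_cx K = {Inl ` \<sigma> \<union> T | \<sigma> T. \<sigma> \<in> K \<and> T \<in> {{}, {Inr True}, {Inr False}}}"

text \<open>Simplicial wedge of complexes K i (i in I), glued at base vertices b i;
  the common base point is None.  Over an empty index set this is a point.\<close>
definition wedge_cx :: "'i set \<Rightarrow> ('i \<Rightarrow> 'w set set) \<Rightarrow> ('i \<Rightarrow> 'w) \<Rightarrow> ('i \<times> 'w) option set set" where
  "wedge_cx I K b = {{}, {None}} \<union>
     (\<Union>i\<in>I. (\<lambda>\<sigma>. (\<lambda>x. if x = b i then None else Some (i, x)) ` \<sigma>) ` K i)"

text \<open>Graphs: finite vertex set V with a symmetric irreflexive adjacency relation E
  (only its restriction to V matters).  Induced subgraphs G \ W are (V - W, E).\<close>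
definition nbhd :: "'a set \<Rightarrow> ('a \<Rightarrow> 'a \<Rightarrow> bool) \<Rightarrow> 'a \<Rightarrow> 'a set" where
  "nbhd V E v = {w\<in>V. E v w}"

definition Ind :: "'a set \<Rightarrow> ('a \<Rightarrow> 'a \<Rightarrow> bool) \<Rightarrow> 'a set set" where
  "Ind V E = {\<sigma>. \<sigma> \<subseteq> V \<and> (\<forall>x\<in>\<sigma>. \<forall>y\<in>\<sigma>. \<not> E x y)}"

end

theory Submission
  imports Defs
begin

definition smplx :: "'v set \<Rightarrow> ('v \<Rightarrow> real) set" where
  "smplx \<sigma> = {f. (\<forall>x. 0 \<le> f x) \<and> (\<forall>x. x \<notin> \<sigma> \<longrightarrow> f x = 0) \<and> sum f \<sigma> = 1}"

lemma smplxI: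
  assumes "\<And>x. 0 \<le> f x" "\<And>x. x \<notin> \<sigma> \<Longrightarrow> f x = 0" "sum f \<sigma> = 1"
  shows "f \<in> smplx \<sigma>"
  using assms by (auto simp: smplx_def)

lemma smplxD:
  assumes "f \<in> smplx \<sigma>"
  shows "0 \<le> f x" "x \<notin> \<sigma> \<Longrightarrow> f x = 0" "sum f \<sigma> = 1"
  using assms by (auto simp: smplx_def)

lemma smplx_mono:
  assumes "f \<in> smplx \<sigma>" "\<sigma> \<subseteq> \<tau>" "finite \<tau>"
  shows "f \<in> smplx \<tau>"
proof (rule smplxI)
  show "0 \<le> f x" for x using smplxD[OF assms(1)] by auto
  show "x \<notin> \<tau> \<Longrightarrow> f x = 0" for x using smplxD[OF assms(1)] assms(2) by auto
  have "sum f \<tau> = sum f \<sigma>"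
    by (rule sum.mono_neutral_right) (use assms smplxD[OF assms(1)] in auto)
  then show "sum f \<tau> = 1" using smplxD[OF assms(1)] by simp
qed

lemma smplx_empty: "smplx {} = {}"
  by (auto simp: smplx_def)

lemma in_realI:
  assumes "\<sigma> \<in> K" "finite \<sigma>" "f \<in> smplx \<sigma>"
  shows "f \<in> realization K"
proof -
  have s: "{x. f x \<noteq> 0} \<subseteq> \<sigma>" using smplxD[OF assms(3)] by auto
  have "sum f {x. f x \<noteq> 0} = sum f \<sigma>"
    by (rule sum.mono_neutral_left) (use assms s in auto)
  then show ?thesis unfolding realization_def
    using assms s smplxD[OF assms(3)] by auto
qed

lemma in_realE:
  assumes "f \<in> realization K"
  obtains \<sigma> where "\<sigma> \<in> K" "finite \<sigma>" "f \<in> smplx \<sigma>"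
proof -
  from assms obtain \<sigma> where s: "\<sigma> \<in> K" "finite \<sigma>" "{x. f x \<noteq> 0} \<subseteq> \<sigma>"
    and nn: "\<forall>x. 0 \<le> f x" and su: "sum f {x. f x \<noteq> 0} = 1"
    unfolding realization_def by auto
  have "sum f {x. f x \<noteq> 0} = sum f \<sigma>"
    by (rule sum.mono_neutral_left) (use s in auto)
  then have "f \<in> smplx \<sigma>" using s nn su by (auto simp: smplx_def)
  then show ?thesis using that s by blast
qed

lemma closed_smplx:
  assumes "finite \<sigma>"
  shows "closed (smplx \<sigma>)"
proof -
  have "smplx \<sigma> = (\<Inter>x. {f. 0 \<le> f x}) \<inter> (\<Inter>x\<in>-\<sigma>. {f. f x = 0}) \<inter> {f. sum f \<sigma> = 1}"
    by (auto simp: smplx_def)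
  moreover have "closed {f::'a\<Rightarrow>real. sum f \<sigma> = 1}"
    by (rule closed_Collect_eq) (auto intro!: continuous_intros)
  moreover have "closed {f::'a\<Rightarrow>real. 0 \<le> f x}" for x
    by (rule closed_Collect_le) (auto intro!: continuous_intros)
  moreover have "closed {f::'a\<Rightarrow>real. f x = 0}" for x
    by (rule closed_Collect_eq) (auto intro!: continuous_intros)
  ultimately show ?thesis by (auto intro!: closed_Int closed_INT)
qed

lemma realization_eq:
  assumes "\<And>\<sigma>. \<sigma> \<in> K \<Longrightarrow> finite \<sigma>"
  shows "realization K = (\<Union>\<sigma>\<in>K. smplx \<sigma>)"
  using assms by (auto intro: in_realI elim: in_realE)

lemma closed_realization:
  assumes "finite K" "\<And>\<sigma>. \<sigma> \<in> K \<Longrightarrow> finite \<sigma>"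
  shows "closed (realization K)"
proof -
  have "realization K = (\<Union>\<sigma>\<in>K. smplx \<sigma>)" by (rule realization_eq[OF assms(2)])
  moreover have "closed (\<Union>\<sigma>\<in>K. smplx \<sigma>)"
    using assms by (intro closed_UN) (auto intro: closed_smplx)
  ultimately show ?thesis by simp
qed

lemma cont_fun:
  fixes F :: "'b::topological_space \<Rightarrow> 'a \<Rightarrow> real"
  assumes "\<And>i. continuous_on S (\<lambda>x. F x i)"
  shows "continuous_on S F"
  using assms by (rule continuous_on_coordinatewise_then_product)

lemma cont_coord:
  fixes F :: "'b::topological_space \<Rightarrow> 'a \<Rightarrow> real"
  assumes "continuous_on S F"
  shows "continuous_on S (\<lambda>x. F x i)"
  using assms by (rule continuous_on_product_then_coordinatewise)

lemma cont_geomI: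
  assumes "continuous_on (realization K) F" "\<And>f. f \<in> realization K \<Longrightarrow> F f \<in> realization K'"
  shows "continuous_map (geom K) (geom K') F"
  using assms by (auto simp: geom_def)

lemma hom_canon:
  fixes h :: "real \<times> 'b::topological_space \<Rightarrow> 'c::topological_space"
  assumes "continuous_on ({0..1} \<times> S) h" "\<And>p. p \<in> {0..1} \<times> S \<Longrightarrow> h p \<in> T"
    "\<And>x. h (0, x) = f x" "\<And>x. h (1, x) = g x"
  shows "homotopic_with (\<lambda>_. True) (top_of_set S) (top_of_set T) f g"
  unfolding homotopic_with_def
proof (rule exI[of _ h], intro conjI)
  show "continuous_map (prod_topology (top_of_set {0..1}) (top_of_set S)) (top_of_set T) h"
    using assms(1,2) by (auto simp: prod_topology_subtopology_eu)
qed (use assms in auto)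

lemma straight_line:
  fixes f g :: "'b::topological_space \<Rightarrow> 'a \<Rightarrow> real"
  assumes "continuous_on S f" "continuous_on S g"
    "\<And>x. x \<in> S \<Longrightarrow> \<exists>\<sigma>\<in>K. finite \<sigma> \<and> f x \<in> smplx \<sigma> \<and> g x \<in> smplx \<sigma>"
  shows "homotopic_with (\<lambda>_. True) (top_of_set S) (geom K) f g"
  unfolding geom_def
proof (rule hom_canon[where h="\<lambda>(s,x). (\<lambda>i. (1 - s) * f x i + s * g x i)"])
  have f: "continuous_on ({0..1} \<times> S) (\<lambda>p. f (snd p) i)" for i
    by (rule cont_coord, rule continuous_on_compose2[OF assms(1)]) (auto intro!: continuous_intros)
  have g: "continuous_on ({0..1} \<times> S) (\<lambda>p. g (snd p) i)" for i
    by (rule cont_coord, rule continuous_on_compose2[OF assms(2)]) (auto intro!: continuous_intros)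
  show "continuous_on ({0..1} \<times> S) (\<lambda>(s,x). (\<lambda>i. (1 - s) * f x i + s * g x i))"
    unfolding case_prod_beta
    by (intro cont_fun continuous_intros f g)
  fix p assume p: "p \<in> {0..1::real} \<times> S"
  then obtain s x where px: "p = (s,x)" "s \<in> {0..1}" "x \<in> S" by auto
  obtain \<sigma> where s: "\<sigma> \<in> K" "finite \<sigma>" "f x \<in> smplx \<sigma>" "g x \<in> smplx \<sigma>"
    using assms(3)[OF px(3)] by blast
  have "(\<lambda>i. (1 - s) * f x i + s * g x i) \<in> smplx \<sigma>"
  proof (rule smplxI)
    show "0 \<le> (1 - s) * f x i + s * g x i" for i
      using px smplxD[OF s(3)] smplxD[OF s(4)] by (auto intro!: add_nonneg_nonneg mult_nonneg_nonneg)
    show "i \<notin> \<sigma> \<Longrightarrow> (1 - s) * f x i + s * g x i = 0" for i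
      using smplxD[OF s(3)] smplxD[OF s(4)] by auto
    show "(\<Sum>i\<in>\<sigma>. (1 - s) * f x i + s * g x i) = 1"
      using smplxD(3)[OF s(3)] smplxD(3)[OF s(4)]
      by (simp add: sum.distrib flip: sum_distrib_left)
  qed
  then show "(case p of (s, x) \<Rightarrow> \<lambda>i. (1 - s) * f x i + s * g x i) \<in> realization K"
    using px s by (auto intro: in_realI)
qed auto

definition phi :: "real \<Rightarrow> real" where
  "phi t = (if t \<le> 1/2 then 2 * t / (1 - t) else 2)"
definition psi :: "real \<Rightarrow> real" where
  "psi t = (if t \<le> 1/2 then 1 / (1 - t) else 2)"

lemma cont_phi: "continuous_on UNIV phi"
proof -
  have "continuous_on UNIV (\<lambda>t::real. if id t \<le> 1/2 then 2 * t / (1 - t) else 2)"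
    by (rule continuous_on_cases_le) (auto intro!: continuous_intros simp: divide_simps)
  then show ?thesis by (simp add: phi_def[abs_def])
qed

lemma cont_psi: "continuous_on UNIV psi"
proof -
  have "continuous_on UNIV (\<lambda>t::real. if id t \<le> 1/2 then 1 / (1 - t) else 2)"
    by (rule continuous_on_cases_le) (auto intro!: continuous_intros simp: divide_simps)
  then show ?thesis by (simp add: psi_def[abs_def])
qed

lemma phi0 [simp]: "phi 0 = 0" and psi0 [simp]: "psi 0 = 1"
  by (auto simp: phi_def psi_def)

lemma phi_nonneg: "0 \<le> t \<Longrightarrow> 0 \<le> phi t"
  by (auto simp: phi_def)
lemma psi_nonneg: "0 \<le> t \<Longrightarrow> 0 \<le> psi t"
  by (auto simp: psi_def)

locale gr =
  fixes V :: "'a set" and E :: "'a \<Rightarrow> 'a \<Rightarrow> bool" and u :: 'a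
  assumes finV: "finite V" and symE: "\<And>x y. E x y \<Longrightarrow> E y x" and irrE: "\<And>x. \<not> E x x"
    and uV: "u \<in> V"
    and cliq: "\<And>x y. x \<in> nbhd V E u \<Longrightarrow> y \<in> nbhd V E u \<Longrightarrow> x \<noteq> y \<Longrightarrow> E x y"
begin

abbreviation "N \<equiv> nbhd V E u"
abbreviation "H v \<equiv> V - (N \<union> nbhd V E v)"
abbreviation "K \<equiv> Ind V E"
abbreviation "L v \<equiv> Ind (H v) E"
abbreviation "W \<equiv> wedge_cx N (\<lambda>v. susp_cx (L v)) (\<lambda>v. Inr True)"

lemma N_sub: "N \<subseteq> V" and finN: "finite N" and uN: "u \<notin> N"
  using finV irrE by (auto simp: nbhd_def intro: finite_subset)

lemma N_E: "v \<in> N \<Longrightarrow> E u v \<and> E v u \<and> v \<in> V"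
  using symE[of u v] by (auto simp: nbhd_def)

lemma H_facts:
  assumes "v \<in> N" "x \<in> H v"
  shows "x \<in> V" "x \<notin> N" "\<not> E v x" "\<not> E x v" "\<not> E u x" "\<not> E x u" "x \<noteq> u" "x \<noteq> v"
  using assms symE[of x v] symE[of x u] N_E[OF assms(1)] uV by (auto simp: nbhd_def)

lemma Ind_iff: "\<sigma> \<in> Ind X E \<longleftrightarrow> \<sigma> \<subseteq> X \<and> (\<forall>x\<in>\<sigma>. \<forall>y\<in>\<sigma>. \<not> E x y)"
  by (simp add: Ind_def)

lemma K_finite: "\<sigma> \<in> K \<Longrightarrow> finite \<sigma>"
  using finV by (auto simp: Ind_iff intro: finite_subset)

lemma L_finite: "\<tau> \<in> L v \<Longrightarrow> finite \<tau>"
  using finV by (auto simp: Ind_iff intro: finite_subset)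

lemma L_K: "\<tau> \<in> L v \<Longrightarrow> \<tau> \<in> K"
  by (auto simp: Ind_iff)


lemma L_sub: "\<tau> \<in> L v \<Longrightarrow> x \<in> \<tau> \<Longrightarrow> x \<in> H v"
  unfolding Ind_iff by blast

lemma L_ind: "\<tau> \<in> L v \<Longrightarrow> x \<in> \<tau> \<Longrightarrow> y \<in> \<tau> \<Longrightarrow> \<not> E x y"
  unfolding Ind_iff by blast

lemma L_ins_v: assumes "v \<in> N" "\<tau> \<in> L v" shows "insert v \<tau> \<in> K"
  unfolding Ind_iff
proof (intro conjI ballI)
  show "insert v \<tau> \<subseteq> V" using N_E[OF assms(1)] H_facts(1)[OF assms(1) L_sub[OF assms(2)]] by blast
  fix x y assume x: "x \<in> insert v \<tau>" and y: "y \<in> insert v \<tau>"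
  show "\<not> E x y"
  proof (cases "x = v")
    case True
    show ?thesis
    proof (cases "y = v")
      case True then show ?thesis using \<open>x = v\<close> irrE by simp
    next
      case False then have "y \<in> \<tau>" using y by simp
      then show ?thesis using H_facts(3)[OF assms(1) L_sub[OF assms(2)]] \<open>x = v\<close> by blast
    qed
  next
    case False then have xt: "x \<in> \<tau>" using x by simp
    show ?thesis
    proof (cases "y = v")
      case True then show ?thesis using H_facts(4)[OF assms(1) L_sub[OF assms(2) xt]] by simp
    next
      case False then have "y \<in> \<tau>" using y by simp
      then show ?thesis using L_ind[OF assms(2) xt] by blast
    qed
  qed
qed

lemma L_ins_u: assumes "v \<in> N" "\<tau> \<in> L v" shows "insert u \<tau> \<in> K"
  unfolding Ind_iff
proof (intro conjI ballI)
  show "insert u \<tau> \<subseteq> V" using uV H_facts(1)[OF assms(1) L_sub[OF assms(2)]] by blast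
  fix x y assume x: "x \<in> insert u \<tau>" and y: "y \<in> insert u \<tau>"
  show "\<not> E x y"
  proof (cases "x = u")
    case True
    show ?thesis
    proof (cases "y = u")
      case True then show ?thesis using \<open>x = u\<close> irrE by simp
    next
      case False then have "y \<in> \<tau>" using y by simp
      then show ?thesis using H_facts(5)[OF assms(1) L_sub[OF assms(2)]] \<open>x = u\<close> by blast
    qed
  next
    case False then have xt: "x \<in> \<tau>" using x by simp
    show ?thesis
    proof (cases "y = u")
      case True then show ?thesis using H_facts(6)[OF assms(1) L_sub[OF assms(2) xt]] by simp
    next
      case False then have "y \<in> \<tau>" using y by simp
      then show ?thesis using L_ind[OF assms(2) xt] by blast
    qed
  qed
qed

lemma L_N: assumes "v \<in> N" "\<tau> \<in> L v" shows "\<tau> \<inter> N = {}" "v \<notin> \<tau>" "u \<notin> \<tau>"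
proof -
  have t: "\<tau> \<subseteq> H v" using assms(2) by (auto simp: Ind_iff)
  then show "\<tau> \<inter> N = {}" "v \<notin> \<tau>" "u \<notin> \<tau>" using H_facts[OF assms(1)] by blast+
qed

lemma cone_face: assumes "\<sigma> \<in> K" "\<sigma> \<inter> N = {}" shows "insert u \<sigma> \<in> K"
proof -
  have t: "\<sigma> \<subseteq> V" "\<forall>x\<in>\<sigma>. \<forall>y\<in>\<sigma>. \<not> E x y" using assms(1) by (auto simp: Ind_iff)
  have "\<forall>x\<in>\<sigma>. \<not> E u x \<and> \<not> E x u"
  proof
    fix x assume x: "x \<in> \<sigma>"
    then have "\<not> E u x" using assms(2) t(1) by (auto simp: nbhd_def)
    then show "\<not> E u x \<and> \<not> E x u" using symE[of x u] by blast
  qed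
  then show ?thesis using t uV irrE unfolding Ind_iff by auto
qed

lemma face_cases:
  assumes "\<sigma> \<in> K"
  shows "\<sigma> \<inter> N = {} \<or> (\<exists>v\<in>N. \<exists>\<tau>\<in>L v. \<sigma> = insert v \<tau>)"
proof (cases "\<sigma> \<inter> N = {}")
  case False
  then obtain v where v: "v \<in> \<sigma>" "v \<in> N" by auto
  have t: "\<sigma> \<subseteq> V" "\<forall>x\<in>\<sigma>. \<forall>y\<in>\<sigma>. \<not> E x y" using assms(1) by (auto simp: Ind_iff)
  have "x \<in> H v" if "x \<in> \<sigma> - {v}" for x
  proof -
    have "x \<notin> N" using cliq[of x v] that v t(2) by blast
    moreover have "\<not> E v x" using that v t(2) by blast
    ultimately show ?thesis using that t(1) by (auto simp: nbhd_def)
  qed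
  then have "\<sigma> - {v} \<in> L v" using t(2) by (auto simp: Ind_iff)
  moreover have "\<sigma> = insert v (\<sigma> - {v})" using v by auto
  ultimately show ?thesis using v by blast
qed simp

definition nsum :: "('a \<Rightarrow> real) \<Rightarrow> real" where
  "nsum f = (\<Sum>v\<in>N. f v)"

lemma caseA:
  assumes "\<sigma> \<inter> N = {}" "f \<in> smplx \<sigma>"
  shows "\<And>w. w \<in> N \<Longrightarrow> f w = 0" "nsum f = 0"
proof -
  show z: "\<And>w. w \<in> N \<Longrightarrow> f w = 0" using assms smplxD[OF assms(2)] by auto
  then show "nsum f = 0" unfolding nsum_def by simp
qed

lemma caseB:
  assumes "v \<in> N" "\<tau> \<in> L v" "f \<in> smplx (insert v \<tau>)"
  shows "v \<notin> \<tau>" "finite \<tau>" "\<tau> \<inter> N = {}" "\<And>w. w \<in> N \<Longrightarrow> w \<noteq> v \<Longrightarrow> f w = 0"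
    "nsum f = f v" "sum f \<tau> = 1 - f v" "0 \<le> f v" "f v \<le> 1"
    "\<And>x. x \<notin> insert v \<tau> \<Longrightarrow> f x = 0" "\<And>x. 0 \<le> f x"
proof -
  show vt: "v \<notin> \<tau>" and ft: "finite \<tau>" and tN: "\<tau> \<inter> N = {}"
    using L_N[OF assms(1,2)] L_finite[OF assms(2)] by auto
  have z: "\<And>x. x \<notin> insert v \<tau> \<Longrightarrow> f x = 0" and nn: "\<And>x. 0 \<le> f x"
    using smplxD[OF assms(3)] by auto
  show "0 \<le> f v" using nn by simp
  show "\<And>x. x \<notin> insert v \<tau> \<Longrightarrow> f x = 0" "\<And>x. 0 \<le> f x" using z nn by auto
  show zw: "\<And>w. w \<in> N \<Longrightarrow> w \<noteq> v \<Longrightarrow> f w = 0"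
    using z tN by auto
  have "nsum f = f v + (\<Sum>w\<in>N-{v}. f w)"
    unfolding nsum_def using finN assms(1) by (simp add: sum.remove)
  also have "(\<Sum>w\<in>N-{v}. f w) = 0" using zw by simp
  finally show "nsum f = f v" by simp
  have "1 = f v + sum f \<tau>" using smplxD(3)[OF assms(3)] vt ft by simp
  then show st: "sum f \<tau> = 1 - f v" by simp
  have "0 \<le> sum f \<tau>" using nn by (simp add: sum_nonneg)
  then show "f v \<le> 1" using st by simp
qed

lemma realK_cases:
  assumes "f \<in> realization K"
  shows "(\<exists>\<sigma>\<in>K. \<sigma> \<inter> N = {} \<and> f \<in> smplx \<sigma>) \<or> (\<exists>v\<in>N. \<exists>\<tau>\<in>L v. f \<in> smplx (insert v \<tau>))"
proof -
  obtain \<sigma> where s: "\<sigma> \<in> K" "f \<in> smplx \<sigma>" using assms by (auto elim: in_realE)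
  show ?thesis using face_cases[OF s(1)] s by blast
qed

definition NF :: "'a \<Rightarrow> 'a set \<Rightarrow> ('a \<times> ('a + bool)) option set" where
  "NF v \<tau> = insert None ((\<lambda>x. Some (v, Inl x)) ` \<tau>)"
definition SF :: "'a \<Rightarrow> 'a set \<Rightarrow> ('a \<times> ('a + bool)) option set" where
  "SF v \<tau> = insert (Some (v, Inr False)) ((\<lambda>x. Some (v, Inl x)) ` \<tau>)"
definition SI :: "'a \<Rightarrow> 'a set \<Rightarrow> ('a \<times> ('a + bool)) option set" where
  "SI v \<tau> = (\<lambda>x. Some (v, Inl x)) ` \<tau>"

lemma NF_fin: "finite \<tau> \<Longrightarrow> finite (NF v \<tau>)" and SF_fin: "finite \<tau> \<Longrightarrow> finite (SF v \<tau>)"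
  and SI_fin: "finite \<tau> \<Longrightarrow> finite (SI v \<tau>)"
  by (auto simp: NF_def SF_def SI_def)

lemma SI_sub: "SI v \<tau> \<subseteq> NF v \<tau>" "SI v \<tau> \<subseteq> SF v \<tau>"
  by (auto simp: NF_def SF_def SI_def)

lemma sum_NF: "finite \<tau> \<Longrightarrow> sum p (NF v \<tau>) = p None + (\<Sum>x\<in>\<tau>. p (Some (v, Inl x)))"
  unfolding NF_def by (subst sum.insert) (auto simp: sum.reindex inj_on_def)

lemma sum_SF: "finite \<tau> \<Longrightarrow> sum p (SF v \<tau>) = p (Some (v, Inr False)) + (\<Sum>x\<in>\<tau>. p (Some (v, Inl x)))"
  unfolding SF_def by (subst sum.insert) (auto simp: sum.reindex inj_on_def)

lemma sum_SI: "sum p (SI v \<tau>) = (\<Sum>x\<in>\<tau>. p (Some (v, Inl x)))"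
  unfolding SI_def by (auto simp: sum.reindex inj_on_def)

lemma None_W: "{None} \<in> W"
  by (simp add: wedge_cx_def)

lemma NF_W: assumes "v \<in> N" "\<tau> \<in> L v" shows "NF v \<tau> \<in> W"
proof -
  have "Inl ` \<tau> \<union> {Inr True} \<in> susp_cx (L v)"
    using assms unfolding susp_cx_def by blast
  moreover have "(\<lambda>x. if x = Inr True then None else Some (v, x)) ` (Inl ` \<tau> \<union> {Inr True}) = NF v \<tau>"
    by (auto simp: NF_def)
  ultimately show ?thesis using assms unfolding wedge_cx_def by blast
qed

lemma SF_W: assumes "v \<in> N" "\<tau> \<in> L v" shows "SF v \<tau> \<in> W"
proof -
  have "Inl ` \<tau> \<union> {Inr False} \<in> susp_cx (L v)"
    using assms unfolding susp_cx_def by blast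
  moreover have "(\<lambda>x. if x = Inr True then None else Some (v, x)) ` (Inl ` \<tau> \<union> {Inr False}) = SF v \<tau>"
    by (auto simp: SF_def)
  ultimately show ?thesis using assms unfolding wedge_cx_def by blast
qed

lemma W_cases:
  assumes "\<sigma> \<in> W"
  shows "\<sigma> = {} \<or> \<sigma> = {None} \<or> (\<exists>v\<in>N. \<exists>\<tau>\<in>L v. \<sigma> \<subseteq> NF v \<tau> \<or> \<sigma> \<subseteq> SF v \<tau>)"
proof -
  { assume "\<sigma> \<noteq> {}" "\<sigma> \<noteq> {None}"
    then obtain v \<rho> where v: "v \<in> N" "\<rho> \<in> susp_cx (L v)"
      and s: "\<sigma> = (\<lambda>x. if x = Inr True then None else Some (v, x)) ` \<rho>"
      using assms unfolding wedge_cx_def by auto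
    then obtain \<tau> T where t: "\<rho> = Inl ` \<tau> \<union> T" "\<tau> \<in> L v" "T \<in> {{}, {Inr True}, {Inr False}}"
      unfolding susp_cx_def by auto
    have "\<sigma> \<subseteq> NF v \<tau> \<or> \<sigma> \<subseteq> SF v \<tau>"
      using t(3) unfolding s t(1) NF_def SF_def by auto
    then have "\<exists>v\<in>N. \<exists>\<tau>\<in>L v. \<sigma> \<subseteq> NF v \<tau> \<or> \<sigma> \<subseteq> SF v \<tau>" using v t by blast }
  then show ?thesis by blast
qed

lemma realW_cases:
  assumes "p \<in> realization W"
  shows "p \<in> smplx {None} \<or> (\<exists>v\<in>N. \<exists>\<tau>\<in>L v. p \<in> smplx (NF v \<tau>) \<or> p \<in> smplx (SF v \<tau>))"
proof -
  obtain \<sigma> where s: "\<sigma> \<in> W" "finite \<sigma>" "p \<in> smplx \<sigma>" using assms by (auto elim: in_realE)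
  consider "\<sigma> = {}" | "\<sigma> = {None}" | v \<tau> where "v \<in> N" "\<tau> \<in> L v" "\<sigma> \<subseteq> NF v \<tau> \<or> \<sigma> \<subseteq> SF v \<tau>"
    using W_cases[OF s(1)] by blast
  then show ?thesis
  proof cases
    case 1 then show ?thesis using s smplx_empty by auto
  next
    case 2 then show ?thesis using s by auto
  next
    case (3 v \<tau>)
    moreover have "finite (NF v \<tau>)" "finite (SF v \<tau>)" using NF_fin SF_fin L_finite[OF 3(2)] by auto
    ultimately show ?thesis using s smplx_mono[of p \<sigma>] by blast
  qed
qed

end

lemma opt_cases:
  fixes z :: "('a \<times> ('b + bool)) option"
  obtains "z = None" | v x where "z = Some (v, Inl x)" | v b where "z = Some (v, Inr b)"
proof (cases z)
  case (Some a) then show ?thesis using that by (cases a; cases "snd a") auto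
qed (use that in auto)

lemma phi_ge: assumes "1/2 \<le> t" shows "phi t = 2"
proof (cases "t \<le> 1/2")
  case True then have e: "t = 1/2" using assms by linarith
  show ?thesis unfolding e by (simp add: phi_def)
qed (simp add: phi_def)

lemma psi_ge: assumes "1/2 \<le> t" shows "psi t = 2"
proof (cases "t \<le> 1/2")
  case True then have e: "t = 1/2" using assms by linarith
  show ?thesis unfolding e by (simp add: psi_def)
qed (simp add: psi_def)

context gr
begin

definition Phi :: "('a \<Rightarrow> real) \<Rightarrow> ('a \<times> ('a + bool)) option \<Rightarrow> real" where
  "Phi f z = (case z of None \<Rightarrow> max 0 (1 - 2 * nsum f)
     | Some (v, Inl x) \<Rightarrow> if v \<in> N \<and> x \<notin> N then f x * phi (f v) else 0
     | Some (v, Inr b) \<Rightarrow> if v \<in> N \<and> \<not> b then max 0 (2 * f v - 1) else 0)"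

definition Psi :: "(('a \<times> ('a + bool)) option \<Rightarrow> real) \<Rightarrow> 'a \<Rightarrow> real" where
  "Psi p y = (if y = u then p None else 0) + (if y \<in> N then p (Some (y, Inr False)) else 0)
      + (if y \<notin> N then (\<Sum>w\<in>N. p (Some (w, Inl y))) else 0)"

definition Dm :: "('a \<Rightarrow> real) \<Rightarrow> 'a \<Rightarrow> real" where
  "Dm f y = (if y \<in> N then max 0 (2 * f y - 1) else f y * psi (nsum f))"

definition Em :: "(('a \<times> ('a + bool)) option \<Rightarrow> real) \<Rightarrow> ('a \<times> ('a + bool)) option \<Rightarrow> real" where
  "Em p z = (case z of None \<Rightarrow> p None
     | Some (v, Inl x) \<Rightarrow> p z * psi (p (Some (v, Inr False)))
     | Some (v, Inr b) \<Rightarrow> if b then p z else max 0 (2 * p z - 1))"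

lemma Phi_simps [simp]:
  "Phi f None = max 0 (1 - 2 * nsum f)"
  "Phi f (Some (v, Inl x)) = (if v \<in> N \<and> x \<notin> N then f x * phi (f v) else 0)"
  "Phi f (Some (v, Inr b)) = (if v \<in> N \<and> \<not> b then max 0 (2 * f v - 1) else 0)"
  by (simp_all add: Phi_def)

lemma Em_simps [simp]:
  "Em p None = p None"
  "Em p (Some (v, Inl x)) = p (Some (v, Inl x)) * psi (p (Some (v, Inr False)))"
  "Em p (Some (v, Inr b)) = (if b then p (Some (v, Inr b)) else max 0 (2 * p (Some (v, Inr b)) - 1))"
  by (simp_all add: Em_def)

lemma img_simps [simp]:
  "Some (w, Inr b) \<notin> (\<lambda>x. Some (v, Inl x)) ` \<tau>"
  "None \<notin> (\<lambda>x. Some (v, Inl x)) ` \<tau>"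
  "Some (w, Inl y) \<in> (\<lambda>x. Some (v, Inl x)) ` \<tau> \<longleftrightarrow> w = v \<and> y \<in> \<tau>"
  by auto

lemma Psi_v: "v \<in> N \<Longrightarrow> Psi p v = p (Some (v, Inr False))"
  using uN by (auto simp: Psi_def)

lemma sum_N_single:
  assumes "v \<in> N" "\<And>w. w \<in> N \<Longrightarrow> w \<noteq> v \<Longrightarrow> g w = 0"
  shows "(\<Sum>w\<in>N. g w) = (g v :: real)"
proof -
  have "(\<Sum>w\<in>N. g w) = g v + (\<Sum>w\<in>N-{v}. g w)"
    using finN assms(1) by (simp add: sum.remove)
  also have "(\<Sum>w\<in>N-{v}. g w) = 0" using assms(2) by simp
  finally show ?thesis by simp
qed

lemma Phi_nonneg: "(\<And>x. 0 \<le> f x) \<Longrightarrow> 0 \<le> Phi f z"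
  by (cases z rule: opt_cases) (auto intro!: mult_nonneg_nonneg phi_nonneg)

lemma Phi_A:
  assumes "\<sigma> \<inter> N = {}" "f \<in> smplx \<sigma>"
  shows "Phi f \<in> smplx {None}"
proof (rule smplxI)
  note A = caseA[OF assms]
  show "0 \<le> Phi f z" for z using Phi_nonneg smplxD(1)[OF assms(2)] by blast
  show "Phi f z = 0" if "z \<notin> {None}" for z
    using that A by (cases z rule: opt_cases) auto
  show "sum (Phi f) {None} = 1" using A by simp
qed

lemma Phi_B1:
  assumes "v \<in> N" "\<tau> \<in> L v" "f \<in> smplx (insert v \<tau>)" "f v \<le> 1/2"
  shows "Phi f \<in> smplx (NF v \<tau>)"
proof (rule smplxI)
  note B = caseB[OF assms(1-3)]
  show "0 \<le> Phi f z" for z using Phi_nonneg B(10) by blast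
  show "Phi f z = 0" if "z \<notin> NF v \<tau>" for z
  proof (cases z rule: opt_cases)
    case 1 then show ?thesis using that by (simp add: NF_def)
  next
    case (2 w x)
    show ?thesis
    proof (cases "w \<in> N \<and> x \<notin> N")
      case True
      show ?thesis
      proof (cases "w = v")
        case True
        then have "x \<notin> insert v \<tau>" using that 2 \<open>w \<in> N \<and> x \<notin> N\<close> by (auto simp: NF_def)
        then show ?thesis using 2 B(9) by simp
      next
        case False then show ?thesis using 2 B(4) True by simp
      qed
    qed (use 2 in auto)
  next
    case (3 w b)
    have "w \<in> N \<Longrightarrow> f w \<le> 1/2" using assms(4) B(4)[of w] by (cases "w = v") auto
    then show ?thesis using 3 by auto
  qed
  have "sum (Phi f) (NF v \<tau>) = Phi f None + (\<Sum>x\<in>\<tau>. Phi f (Some (v, Inl x)))"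
    by (rule sum_NF[OF B(2)])
  also have "(\<Sum>x\<in>\<tau>. Phi f (Some (v, Inl x))) = (\<Sum>x\<in>\<tau>. f x * phi (f v))"
    using B(3) assms(1) by (intro sum.cong) auto
  also have "\<dots> = (1 - f v) * phi (f v)" using B(6) by (simp add: sum_distrib_right[symmetric])
  also have "\<dots> = 2 * f v" using assms(4) by (simp add: phi_def)
  finally show "sum (Phi f) (NF v \<tau>) = 1" using B(5) assms(4) by simp
qed

lemma Phi_B2:
  assumes "v \<in> N" "\<tau> \<in> L v" "f \<in> smplx (insert v \<tau>)" "1/2 \<le> f v"
  shows "Phi f \<in> smplx (SF v \<tau>)"
proof (rule smplxI)
  note B = caseB[OF assms(1-3)]
  show "0 \<le> Phi f z" for z using Phi_nonneg B(10) by blast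
  show "Phi f z = 0" if "z \<notin> SF v \<tau>" for z
  proof (cases z rule: opt_cases)
    case 1 then show ?thesis using B(5) assms(4) by simp
  next
    case (2 w x)
    show ?thesis
    proof (cases "w \<in> N \<and> x \<notin> N")
      case True
      show ?thesis
      proof (cases "w = v")
        case True
        then have "x \<notin> insert v \<tau>" using that 2 \<open>w \<in> N \<and> x \<notin> N\<close> by (auto simp: SF_def)
        then show ?thesis using 2 B(9) by simp
      next
        case False then show ?thesis using 2 B(4) True by simp
      qed
    qed (use 2 in auto)
  next
    case (3 w b)
    show ?thesis
    proof (cases "w \<in> N \<and> \<not> b")
      case True
      then have "w \<noteq> v" using that 3 by (auto simp: SF_def)
      then show ?thesis using 3 B(4) True by simp
    qed (use 3 in auto)
  qed
  have "sum (Phi f) (SF v \<tau>) = Phi f (Some (v, Inr False)) + (\<Sum>x\<in>\<tau>. Phi f (Some (v, Inl x)))"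
    by (rule sum_SF[OF B(2)])
  also have "(\<Sum>x\<in>\<tau>. Phi f (Some (v, Inl x))) = (\<Sum>x\<in>\<tau>. f x * phi (f v))"
    using B(3) assms(1) by (intro sum.cong) auto
  also have "\<dots> = (1 - f v) * phi (f v)" using B(6) by (simp add: sum_distrib_right[symmetric])
  also have "\<dots> = 2 * (1 - f v)" using phi_ge[OF assms(4)] by simp
  finally show "sum (Phi f) (SF v \<tau>) = 1" using assms(1,4) by simp
qed

lemma Psi_nonneg: "(\<And>z. 0 \<le> p z) \<Longrightarrow> 0 \<le> Psi p y"
  unfolding Psi_def by (intro add_nonneg_nonneg) (auto intro: sum_nonneg)

lemma Psi_None:
  assumes "p \<in> smplx {None}"
  shows "Psi p \<in> smplx {u}"
proof (rule smplxI)
  show "0 \<le> Psi p y" for y using Psi_nonneg smplxD(1)[OF assms] by blast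
  show "Psi p y = 0" if "y \<notin> {u}" for y
    using that smplxD(2)[OF assms] by (auto simp: Psi_def)
  have "p None = 1" using smplxD(3)[OF assms] by simp
  then show "sum (Psi p) {u} = 1" using uN smplxD(2)[OF assms] by (simp add: Psi_def)
qed

lemma Psi_NF:
  assumes "v \<in> N" "\<tau> \<in> L v" "p \<in> smplx (NF v \<tau>)"
  shows "Psi p \<in> smplx (insert u \<tau>)"
proof (rule smplxI)
  have ft: "finite \<tau>" and ut: "u \<notin> \<tau>" and tN: "\<tau> \<inter> N = {}" using L_finite[OF assms(2)] L_N[OF assms(1,2)] by auto
  have z: "\<And>z. z \<notin> NF v \<tau> \<Longrightarrow> p z = 0" using smplxD(2)[OF assms(3)] by blast
  show "0 \<le> Psi p y" for y using Psi_nonneg smplxD(1)[OF assms(3)] by blast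
  have zi: "p (Some (w, Inl y)) = 0" if "y \<notin> \<tau>" for w y
    using z[of "Some (w, Inl y)"] that by (auto simp: NF_def)
  have zr: "p (Some (w, Inr b)) = 0" for w b
    using z[of "Some (w, Inr b)"] by (auto simp: NF_def)
  show "Psi p y = 0" if "y \<notin> insert u \<tau>" for y
    using that zi[of y] zr by (auto simp: Psi_def)
  have pu: "Psi p u = p None" using uN ut zi[of u] by (auto simp: Psi_def)
  have py: "Psi p y = p (Some (v, Inl y))" if "y \<in> \<tau>" for y
  proof -
    have "y \<noteq> u" "y \<notin> N" using that ut tN by auto
    moreover have "(\<Sum>w\<in>N. p (Some (w, Inl y))) = p (Some (v, Inl y))"
    proof (rule sum_N_single[OF assms(1)])
      fix w assume "w \<in> N" "w \<noteq> v"
      then show "p (Some (w, Inl y)) = 0" using z[of "Some (w, Inl y)"] by (auto simp: NF_def)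
    qed
    ultimately show ?thesis by (simp add: Psi_def)
  qed
  have "sum (Psi p) (insert u \<tau>) = Psi p u + sum (Psi p) \<tau>" using ft ut by simp
  also have "\<dots> = p None + (\<Sum>x\<in>\<tau>. p (Some (v, Inl x)))" using pu py by simp
  also have "\<dots> = sum p (NF v \<tau>)" using sum_NF[OF ft, of p v] by simp
  finally show "sum (Psi p) (insert u \<tau>) = 1" using smplxD(3)[OF assms(3)] by simp
qed

lemma Psi_SF:
  assumes "v \<in> N" "\<tau> \<in> L v" "p \<in> smplx (SF v \<tau>)"
  shows "Psi p \<in> smplx (insert v \<tau>)"
proof (rule smplxI)
  have ft: "finite \<tau>" and ut: "u \<notin> \<tau>" and vt: "v \<notin> \<tau>" and tN: "\<tau> \<inter> N = {}"
    using L_finite[OF assms(2)] L_N[OF assms(1,2)] by auto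
  have z: "\<And>z. z \<notin> SF v \<tau> \<Longrightarrow> p z = 0" using smplxD(2)[OF assms(3)] by blast
  show "0 \<le> Psi p y" for y using Psi_nonneg smplxD(1)[OF assms(3)] by blast
  have zi: "p (Some (w, Inl y)) = 0" if "y \<notin> \<tau>" for w y
    using z[of "Some (w, Inl y)"] that by (auto simp: SF_def)
  have zr: "p (Some (w, Inr False)) = 0" if "w \<noteq> v" for w
    using z[of "Some (w, Inr False)"] that by (auto simp: SF_def)
  have zn: "p None = 0" using z[of None] by (auto simp: SF_def)
  show "Psi p y = 0" if "y \<notin> insert v \<tau>" for y
    using that zi[of y] zr[of y] zn by (auto simp: Psi_def)
  have pv: "Psi p v = p (Some (v, Inr False))" using Psi_v[OF assms(1)] .
  have py: "Psi p y = p (Some (v, Inl y))" if "y \<in> \<tau>" for y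
  proof -
    have "y \<noteq> u" "y \<notin> N" using that ut tN by auto
    moreover have "(\<Sum>w\<in>N. p (Some (w, Inl y))) = p (Some (v, Inl y))"
    proof (rule sum_N_single[OF assms(1)])
      fix w assume "w \<in> N" "w \<noteq> v"
      then show "p (Some (w, Inl y)) = 0" using z[of "Some (w, Inl y)"] by (auto simp: SF_def)
    qed
    ultimately show ?thesis by (simp add: Psi_def)
  qed
  have "sum (Psi p) (insert v \<tau>) = Psi p v + sum (Psi p) \<tau>" using ft vt by simp
  also have "\<dots> = p (Some (v, Inr False)) + (\<Sum>x\<in>\<tau>. p (Some (v, Inl x)))" using pv py by simp
  also have "\<dots> = sum p (SF v \<tau>)" using sum_SF[OF ft, of p v] by simp
  finally show "sum (Psi p) (insert v \<tau>) = 1" using smplxD(3)[OF assms(3)] by simp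
qed

lemma Dm_A:
  assumes "\<sigma> \<inter> N = {}" "f \<in> smplx \<sigma>"
  shows "Dm f = f"
proof
  fix y
  note A = caseA[OF assms]
  show "Dm f y = f y" using A by (auto simp: Dm_def)
qed

lemma Dm_B1:
  assumes "v \<in> N" "\<tau> \<in> L v" "f \<in> smplx (insert v \<tau>)" "f v \<le> 1/2"
  shows "Dm f \<in> smplx \<tau>"
proof (rule smplxI)
  note B = caseB[OF assms(1-3)]
  show "0 \<le> Dm f y" for y using B(10) B(5) by (auto simp: Dm_def intro!: mult_nonneg_nonneg psi_nonneg)
  show "Dm f y = 0" if "y \<notin> \<tau>" for y
  proof (cases "y \<in> N")
    case True
    have "f y \<le> 1/2" using assms(4) B(4)[of y] True by (cases "y = v") auto
    then show ?thesis using True by (simp add: Dm_def)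
  next
    case False
    then have "y \<noteq> v" using assms(1) by auto
    then show ?thesis using False that B(9) by (simp add: Dm_def)
  qed
  have "sum (Dm f) \<tau> = (\<Sum>y\<in>\<tau>. f y * psi (f v))"
    using B(3,5) by (intro sum.cong) (auto simp: Dm_def)
  also have "\<dots> = (1 - f v) * psi (f v)" using B(6) by (simp add: sum_distrib_right[symmetric])
  also have "\<dots> = 1" using assms(4) by (simp add: psi_def)
  finally show "sum (Dm f) \<tau> = 1" .
qed

lemma Dm_B2:
  assumes "v \<in> N" "\<tau> \<in> L v" "f \<in> smplx (insert v \<tau>)" "1/2 \<le> f v"
  shows "Dm f \<in> smplx (insert v \<tau>)"
proof (rule smplxI)
  note B = caseB[OF assms(1-3)]
  show "0 \<le> Dm f y" for y using B(10) B(5) by (auto simp: Dm_def intro!: mult_nonneg_nonneg psi_nonneg)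
  show "Dm f y = 0" if "y \<notin> insert v \<tau>" for y
  proof (cases "y \<in> N")
    case True
    then show ?thesis using that B(4)[of y] by (simp add: Dm_def)
  next
    case False
    then show ?thesis using that B(9) by (simp add: Dm_def)
  qed
  have "sum (Dm f) (insert v \<tau>) = Dm f v + sum (Dm f) \<tau>" using B(1,2) by simp
  also have "sum (Dm f) \<tau> = (\<Sum>y\<in>\<tau>. f y * psi (f v))"
    using B(3,5) by (intro sum.cong) (auto simp: Dm_def)
  also have "\<dots> = (1 - f v) * psi (f v)" using B(6) by (simp add: sum_distrib_right[symmetric])
  also have "\<dots> = 2 * (1 - f v)" using psi_ge[OF assms(4)] by simp
  finally show "sum (Dm f) (insert v \<tau>) = 1" using assms(1,4) by (simp add: Dm_def)
qed

lemma Em_nonneg: "(\<And>z. 0 \<le> p z) \<Longrightarrow> 0 \<le> Em p z"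
  by (cases z rule: opt_cases) (auto intro!: mult_nonneg_nonneg psi_nonneg)

lemma Em_id:
  assumes "\<And>w. p (Some (w, Inr False)) = 0"
  shows "Em p = p"
proof
  fix z show "Em p z = p z" using assms by (cases z rule: opt_cases) auto
qed

lemma Em_None: "p \<in> smplx {None} \<Longrightarrow> Em p = p"
  by (rule Em_id) (auto dest: smplxD(2))

lemma Em_NF: "p \<in> smplx (NF v \<tau>) \<Longrightarrow> Em p = p"
  by (rule Em_id) (auto dest: smplxD(2) simp: NF_def)

lemma Em_SF1:
  assumes "v \<in> N" "\<tau> \<in> L v" "p \<in> smplx (SF v \<tau>)" "p (Some (v, Inr False)) \<le> 1/2"
  shows "Em p \<in> smplx (SI v \<tau>)"
proof (rule smplxI)
  have ft: "finite \<tau>" using L_finite[OF assms(2)] .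
  have zz: "\<And>z. z \<notin> SF v \<tau> \<Longrightarrow> p z = 0" and nn: "\<And>z. 0 \<le> p z" using smplxD[OF assms(3)] by blast+
  show "0 \<le> Em p z" for z using Em_nonneg nn by blast
  show "Em p z = 0" if "z \<notin> SI v \<tau>" for z
  proof (cases z rule: opt_cases)
    case 1 then show ?thesis using zz[of None] by (auto simp: SF_def)
  next
    case (2 w x) then show ?thesis using zz[of z] that by (auto simp: SF_def SI_def)
  next
    case (3 w b)
    show ?thesis
    proof (cases "w = v \<and> \<not> b")
      case True then show ?thesis using 3 assms(4) by auto
    next
      case False then show ?thesis using 3 zz[of z] by (auto simp: SF_def)
    qed
  qed
  have s1: "p (Some (v, Inr False)) + (\<Sum>x\<in>\<tau>. p (Some (v, Inl x))) = 1"
    using sum_SF[OF ft, of p v] smplxD(3)[OF assms(3)] by simp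
  have "sum (Em p) (SI v \<tau>) = (\<Sum>x\<in>\<tau>. p (Some (v, Inl x)) * psi (p (Some (v, Inr False))))"
    by (simp add: sum_SI)
  also have "\<dots> = (1 - p (Some (v, Inr False))) * psi (p (Some (v, Inr False)))"
    using s1 by (simp add: sum_distrib_right[symmetric])
  also have "\<dots> = 1" using assms(4) by (simp add: psi_def)
  finally show "sum (Em p) (SI v \<tau>) = 1" .
qed

lemma Em_SF2:
  assumes "v \<in> N" "\<tau> \<in> L v" "p \<in> smplx (SF v \<tau>)" "1/2 \<le> p (Some (v, Inr False))"
  shows "Em p \<in> smplx (SF v \<tau>)"
proof (rule smplxI)
  have ft: "finite \<tau>" using L_finite[OF assms(2)] .
  have z: "\<And>z. z \<notin> SF v \<tau> \<Longrightarrow> p z = 0" and nn: "\<And>z. 0 \<le> p z" using smplxD[OF assms(3)] by blast+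
  show "0 \<le> Em p z" for z using Em_nonneg nn by blast
  show "Em p q = 0" if "q \<notin> SF v \<tau>" for q
    using z[OF that] by (cases q rule: opt_cases) auto
  have s1: "p (Some (v, Inr False)) + (\<Sum>x\<in>\<tau>. p (Some (v, Inl x))) = 1"
    using sum_SF[OF ft, of p v] smplxD(3)[OF assms(3)] by simp
  have "sum (Em p) (SF v \<tau>) = Em p (Some (v, Inr False)) + (\<Sum>x\<in>\<tau>. p (Some (v, Inl x)) * psi (p (Some (v, Inr False))))"
    by (simp add: sum_SF[OF ft])
  also have "\<dots> = (2 * p (Some (v, Inr False)) - 1) + (1 - p (Some (v, Inr False))) * 2"
    using s1 assms(4) psi_ge[OF assms(4)] by (simp add: sum_distrib_right[symmetric])
  finally show "sum (Em p) (SF v \<tau>) = 1" by simp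
qed

end

lemma coord_ci [continuous_intros]:
  "continuous_on S (\<lambda>f::'a\<Rightarrow>real. f i)"
  by (rule continuous_on_subset[OF continuous_on_product_coordinates]) simp

lemma straight_line_K:
  fixes f g :: "('v \<Rightarrow> real) \<Rightarrow> 'v \<Rightarrow> real"
  assumes "continuous_on (realization K) f" "continuous_on (realization K) g"
    "\<And>x. x \<in> realization K \<Longrightarrow> \<exists>\<sigma>\<in>K. finite \<sigma> \<and> f x \<in> smplx \<sigma> \<and> g x \<in> smplx \<sigma>"
  shows "homotopic_with (\<lambda>_. True) (geom K) (geom K) f g"
proof -
  have "homotopic_with (\<lambda>_. True) (top_of_set (realization K)) (geom K) f g"
    by (rule straight_line) (use assms in auto)
  then show ?thesis by (simp add: geom_def)
qed

context gr
begin

lemma cont_Phi: "continuous_on UNIV Phi"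
proof (rule cont_fun)
  fix z
  show "continuous_on UNIV (\<lambda>f. Phi f z)"
  proof (cases z rule: opt_cases)
    case 1 then show ?thesis by (simp add: nsum_def) (intro continuous_intros)
  next
    case (2 w x)
    then show ?thesis
      by (cases "w \<in> N \<and> x \<notin> N")
        (auto intro!: continuous_intros continuous_on_compose2[OF cont_phi])
  next
    case (3 w b)
    then show ?thesis
      by (cases "w \<in> N \<and> \<not> b") (auto intro!: continuous_intros)
  qed
qed

lemma cont_Psi: "continuous_on UNIV Psi"
proof (rule cont_fun)
  fix y
  show "continuous_on UNIV (\<lambda>p. Psi p y)"
    unfolding Psi_def
    by (cases "y = u"; cases "y \<in> N") (auto intro!: continuous_intros)
qed

lemma cont_Dm: "continuous_on UNIV Dm"
proof (rule cont_fun)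
  fix y
  show "continuous_on UNIV (\<lambda>f. Dm f y)"
    unfolding Dm_def nsum_def
    by (cases "y \<in> N") (auto intro!: continuous_intros continuous_on_compose2[OF cont_psi])
qed

lemma cont_Em: "continuous_on UNIV Em"
proof (rule cont_fun)
  fix z
  show "continuous_on UNIV (\<lambda>p. Em p z)"
  proof (cases z rule: opt_cases)
    case 1 then show ?thesis by simp
  next
    case (2 w x)
    then show ?thesis
      by (auto intro!: continuous_intros continuous_on_compose2[OF cont_psi])
  next
    case (3 w b)
    then show ?thesis
      by (cases b) (auto intro!: continuous_intros)
  qed
qed

lemma singleton_u_K: "{u} \<in> K"
  using uV irrE by (auto simp: Ind_iff)

lemma Phi_real: "f \<in> realization K \<Longrightarrow> Phi f \<in> realization W"
proof -
  assume f: "f \<in> realization K"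
  from realK_cases[OF f] show ?thesis
  proof (elim disjE bexE conjE)
    fix \<sigma> assume "\<sigma> \<in> K" "\<sigma> \<inter> N = {}" "f \<in> smplx \<sigma>"
    then show ?thesis using Phi_A None_W by (auto intro: in_realI)
  next
    fix v \<tau> assume v: "v \<in> N" "\<tau> \<in> L v" "f \<in> smplx (insert v \<tau>)"
    have ft: "finite \<tau>" using L_finite[OF v(2)] .
    show ?thesis
    proof (cases "f v \<le> 1/2")
      case True then show ?thesis using Phi_B1[OF v True] NF_W[OF v(1,2)] NF_fin[OF ft] by (auto intro: in_realI)
    next
      case False then have "1/2 \<le> f v" by simp
      then show ?thesis using Phi_B2[OF v] SF_W[OF v(1,2)] SF_fin[OF ft] by (auto intro: in_realI)
    qed
  qed
qed

lemma Psi_real: "p \<in> realization W \<Longrightarrow> Psi p \<in> realization K"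
proof -
  assume p: "p \<in> realization W"
  from realW_cases[OF p] show ?thesis
  proof (elim disjE bexE)
    assume "p \<in> smplx {None}"
    then show ?thesis using Psi_None singleton_u_K by (auto intro: in_realI)
  next
    fix v \<tau> assume v: "v \<in> N" "\<tau> \<in> L v" and "p \<in> smplx (NF v \<tau>)"
    then show ?thesis using Psi_NF[OF v] L_ins_u[OF v] L_finite[OF v(2)] by (auto intro: in_realI)
  next
    fix v \<tau> assume v: "v \<in> N" "\<tau> \<in> L v" and "p \<in> smplx (SF v \<tau>)"
    then show ?thesis using Psi_SF[OF v] L_ins_v[OF v] L_finite[OF v(2)] by (auto intro: in_realI)
  qed
qed

lemma hK1: "homotopic_with (\<lambda>_. True) (geom K) (geom K) id Dm"
proof (rule straight_line_K)
  show "continuous_on (realization K) id" by (rule continuous_on_id')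
  show "continuous_on (realization K) Dm" using cont_Dm continuous_on_subset by blast
  fix f assume f: "f \<in> realization K"
  from realK_cases[OF f] show "\<exists>\<sigma>\<in>K. finite \<sigma> \<and> id f \<in> smplx \<sigma> \<and> Dm f \<in> smplx \<sigma>"
  proof (elim disjE bexE conjE)
    fix \<sigma> assume "\<sigma> \<in> K" "\<sigma> \<inter> N = {}" "f \<in> smplx \<sigma>"
    then show ?thesis using Dm_A K_finite by auto
  next
    fix v \<tau> assume v: "v \<in> N" "\<tau> \<in> L v" "f \<in> smplx (insert v \<tau>)"
    have ft: "finite (insert v \<tau>)" using L_finite[OF v(2)] by simp
    have "Dm f \<in> smplx (insert v \<tau>)"
    proof (cases "f v \<le> 1/2")
      case True then show ?thesis using Dm_B1[OF v True] smplx_mono ft by blast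
    next
      case False then have "1/2 \<le> f v" by simp
      then show ?thesis using Dm_B2[OF v] by blast
    qed
    then show ?thesis using v ft L_ins_v[OF v(1,2)] by auto
  qed
qed

lemma hK2: "homotopic_with (\<lambda>_. True) (geom K) (geom K) Dm (Psi \<circ> Phi)"
proof (rule straight_line_K)
  show "continuous_on (realization K) Dm" using cont_Dm continuous_on_subset by blast
  show "continuous_on (realization K) (Psi \<circ> Phi)"
    using continuous_on_compose[OF cont_Phi continuous_on_subset[OF cont_Psi]] continuous_on_subset by blast
  fix f assume f: "f \<in> realization K"
  from realK_cases[OF f] show "\<exists>\<sigma>\<in>K. finite \<sigma> \<and> Dm f \<in> smplx \<sigma> \<and> (Psi \<circ> Phi) f \<in> smplx \<sigma>"
  proof (elim disjE bexE conjE)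
    fix \<sigma> assume s: "\<sigma> \<in> K" "\<sigma> \<inter> N = {}" "f \<in> smplx \<sigma>"
    have fin: "finite (insert u \<sigma>)" using K_finite[OF s(1)] by simp
    have "Dm f \<in> smplx (insert u \<sigma>)" using Dm_A[OF s(2,3)] s(3) smplx_mono fin by (metis subset_insertI)
    moreover have "(Psi \<circ> Phi) f \<in> smplx (insert u \<sigma>)"
      using Psi_None[OF Phi_A[OF s(2,3)]] smplx_mono fin by fastforce
    ultimately show ?thesis using cone_face[OF s(1,2)] fin by blast
  next
    fix v \<tau> assume v: "v \<in> N" "\<tau> \<in> L v" "f \<in> smplx (insert v \<tau>)"
    have ft: "finite (insert v \<tau>)" "finite (insert u \<tau>)" using L_finite[OF v(2)] by auto
    show ?thesis
    proof (cases "f v \<le> 1/2")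
      case True
      have "Dm f \<in> smplx (insert u \<tau>)" using Dm_B1[OF v True] smplx_mono ft by (metis subset_insertI)
      moreover have "(Psi \<circ> Phi) f \<in> smplx (insert u \<tau>)" using Psi_NF[OF v(1,2) Phi_B1[OF v True]] by simp
      ultimately show ?thesis using L_ins_u[OF v(1,2)] ft by blast
    next
      case False then have h: "1/2 \<le> f v" by simp
      have "Dm f \<in> smplx (insert v \<tau>)" using Dm_B2[OF v h] .
      moreover have "(Psi \<circ> Phi) f \<in> smplx (insert v \<tau>)" using Psi_SF[OF v(1,2) Phi_B2[OF v h]] by simp
      ultimately show ?thesis using L_ins_v[OF v(1,2)] ft by blast
    qed
  qed
qed

lemma hW1: "homotopic_with (\<lambda>_. True) (geom W) (geom W) id Em"
proof (rule straight_line_K)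
  show "continuous_on (realization W) id" by (rule continuous_on_id')
  show "continuous_on (realization W) Em" by (rule continuous_on_subset[OF cont_Em]) simp
  fix p assume p: "p \<in> realization W"
  from realW_cases[OF p] show "\<exists>\<sigma>\<in>W. finite \<sigma> \<and> id p \<in> smplx \<sigma> \<and> Em p \<in> smplx \<sigma>"
  proof (elim disjE bexE)
    assume p: "p \<in> smplx {None}"
    show ?thesis
    proof (rule bexI[of _ "{None}"])
      show "{None} \<in> W" by (rule None_W)
      show "finite {None} \<and> id p \<in> smplx {None} \<and> Em p \<in> smplx {None}"
        using p Em_None[OF p] by simp
    qed
  next
    fix v \<tau> assume v: "v \<in> N" "\<tau> \<in> L v" and p: "p \<in> smplx (NF v \<tau>)"
    have fin: "finite (NF v \<tau>)" using NF_fin L_finite[OF v(2)] by auto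
    show ?thesis
    proof (rule bexI[of _ "NF v \<tau>"])
      show "NF v \<tau> \<in> W" by (rule NF_W[OF v])
      show "finite (NF v \<tau>) \<and> id p \<in> smplx (NF v \<tau>) \<and> Em p \<in> smplx (NF v \<tau>)"
        using fin p Em_NF[OF p] by simp
    qed
  next
    fix v \<tau> assume v: "v \<in> N" "\<tau> \<in> L v" and p: "p \<in> smplx (SF v \<tau>)"
    have ft: "finite (SF v \<tau>)" using SF_fin L_finite[OF v(2)] by auto
    have "Em p \<in> smplx (SF v \<tau>)"
    proof (cases "p (Some (v, Inr False)) \<le> 1/2")
      case True show ?thesis using smplx_mono[OF Em_SF1[OF v p True] SI_sub(2) ft] .
    next
      case False then have "1/2 \<le> p (Some (v, Inr False))" by simp
      then show ?thesis using Em_SF2[OF v p] by blast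
    qed
    then show ?thesis
    proof (intro bexI[of _ "SF v \<tau>"])
      show "SF v \<tau> \<in> W" by (rule SF_W[OF v])
    qed (use p ft in simp)
  qed
qed

lemma hW2: "homotopic_with (\<lambda>_. True) (geom W) (geom W) Em (Phi \<circ> Psi)"
proof (rule straight_line_K)
  show "continuous_on (realization W) Em" using cont_Em continuous_on_subset by blast
  show "continuous_on (realization W) (Phi \<circ> Psi)"
    using continuous_on_compose[OF cont_Psi continuous_on_subset[OF cont_Phi]] continuous_on_subset by blast
  fix p assume p: "p \<in> realization W"
  from realW_cases[OF p] show "\<exists>\<sigma>\<in>W. finite \<sigma> \<and> Em p \<in> smplx \<sigma> \<and> (Phi \<circ> Psi) p \<in> smplx \<sigma>"
  proof (elim disjE bexE)
    assume p: "p \<in> smplx {None}"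
    have "(Phi \<circ> Psi) p \<in> smplx {None}" using Phi_A[OF _ Psi_None[OF p]] uN by simp
    then show ?thesis using Em_None[OF p] p None_W by auto
  next
    fix v \<tau> assume v: "v \<in> N" "\<tau> \<in> L v" and p: "p \<in> smplx (NF v \<tau>)"
    have ft: "finite (NF v \<tau>)" using NF_fin L_finite[OF v(2)] by auto
    have "insert u \<tau> \<inter> N = {}" using uN L_N[OF v] by auto
    then have "(Phi \<circ> Psi) p \<in> smplx {None}" using Phi_A[OF _ Psi_NF[OF v p]] by simp
    then have "(Phi \<circ> Psi) p \<in> smplx (NF v \<tau>)" using smplx_mono ft by (fastforce simp: NF_def)
    then show ?thesis using Em_NF[OF p] p ft NF_W[OF v] by auto
  next
    fix v \<tau> assume v: "v \<in> N" "\<tau> \<in> L v" and p: "p \<in> smplx (SF v \<tau>)"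
    have ft: "finite (SF v \<tau>)" "finite (NF v \<tau>)" using SF_fin NF_fin L_finite[OF v(2)] by auto
    have ps: "Psi p \<in> smplx (insert v \<tau>)" using Psi_SF[OF v p] .
    have pv: "Psi p v = p (Some (v, Inr False))" using Psi_v[OF v(1)] .
    show ?thesis
    proof (cases "p (Some (v, Inr False)) \<le> 1/2")
      case True
      have "Em p \<in> smplx (NF v \<tau>)" using Em_SF1[OF v p True] smplx_mono ft SI_sub by blast
      moreover have "(Phi \<circ> Psi) p \<in> smplx (NF v \<tau>)" using Phi_B1[OF v ps] pv True by simp
      ultimately show ?thesis using ft NF_W[OF v] by blast
    next
      case False then have h: "1/2 \<le> p (Some (v, Inr False))" by simp
      have "Em p \<in> smplx (SF v \<tau>)" using Em_SF2[OF v p h] .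
      moreover have "(Phi \<circ> Psi) p \<in> smplx (SF v \<tau>)" using Phi_B2[OF v ps] pv h by simp
      ultimately show ?thesis using ft SF_W[OF v] by blast
    qed
  qed
qed

theorem part1: "geom K homotopy_equivalent_space geom W"
  unfolding homotopy_equivalent_space_def
proof (intro exI conjI)
  show "continuous_map (geom K) (geom W) Phi"
    by (rule cont_geomI) (use cont_Phi continuous_on_subset Phi_real in blast)+
  show "continuous_map (geom W) (geom K) Psi"
    by (rule cont_geomI) (use cont_Psi continuous_on_subset Psi_real in blast)+
  show "homotopic_with (\<lambda>x. True) (geom K) (geom K) (Psi \<circ> Phi) id"
    using homotopic_with_trans[OF hK1 hK2] homotopic_with_sym by blast
  show "homotopic_with (\<lambda>x. True) (geom W) (geom W) (Phi \<circ> Psi) id"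
    using homotopic_with_trans[OF hW1 hW2] homotopic_with_sym by blast
qed

end

definition delta :: "'a \<Rightarrow> 'a \<Rightarrow> real" where
  "delta v = (\<lambda>y. if y = v then 1 else 0)"

lemma delta_smplx: "delta v \<in> smplx {v}"
  by (auto simp: delta_def smplx_def)

lemma comb_smplx:
  assumes "v \<notin> \<rho>" "finite \<rho>" "k \<in> smplx \<rho>" "0 \<le> t" "t \<le> 1"
  shows "(\<lambda>y. t * delta v y + (1 - t) * k y) \<in> smplx (insert v \<rho>)"
proof (rule smplxI)
  have kv: "k v = 0" using smplxD(2)[OF assms(3)] assms(1) by simp
  show "0 \<le> t * delta v y + (1 - t) * k y" for y
    using assms(4,5) smplxD(1)[OF assms(3)] by (auto simp: delta_def)
  show "t * delta v y + (1 - t) * k y = 0" if "y \<notin> insert v \<rho>" for y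
    using that smplxD(2)[OF assms(3)] by (auto simp: delta_def)
  have "(\<Sum>y\<in>insert v \<rho>. t * delta v y + (1 - t) * k y)
      = (t + (1 - t) * k v) + (\<Sum>y\<in>\<rho>. t * delta v y + (1 - t) * k y)"
    using assms(1,2) by (simp add: delta_def)
  also have "(\<Sum>y\<in>\<rho>. t * delta v y + (1 - t) * k y) = (\<Sum>y\<in>\<rho>. (1 - t) * k y)"
    using assms(1) by (intro sum.cong) (auto simp: delta_def)
  also have "\<dots> = (1 - t) * sum k \<rho>" by (simp add: sum_distrib_left)
  finally show "(\<Sum>y\<in>insert v \<rho>. t * delta v y + (1 - t) * k y) = 1"
    using kv smplxD(3)[OF assms(3)] by simp
qed

locale gr2 = gr V E u for V :: "'a set" and E u +
  fixes GF :: "'a \<Rightarrow> 'a set set"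
    and hh :: "'a \<Rightarrow> real \<times> ('a \<Rightarrow> real) \<Rightarrow> 'a \<Rightarrow> real" and cc :: "'a \<Rightarrow> 'a \<Rightarrow> real"
  assumes hyp: "\<And>v. v \<in> nbhd V E u \<Longrightarrow> V - (nbhd V E u \<union> nbhd V E v) \<noteq> {} \<Longrightarrow>
      generating_faces (Ind (V - (nbhd V E u \<union> nbhd V E v)) E) (GF v)"
    and hcont: "\<And>v. v \<in> nbhd V E u \<Longrightarrow> V - (nbhd V E u \<union> nbhd V E v) \<noteq> {} \<Longrightarrow>
      continuous_on ({0..1} \<times> realization (Ind (V - (nbhd V E u \<union> nbhd V E v)) E - GF v)) (hh v)"
    and himg: "\<And>v p. v \<in> nbhd V E u \<Longrightarrow> V - (nbhd V E u \<union> nbhd V E v) \<noteq> {} \<Longrightarrow>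
      p \<in> {0..1} \<times> realization (Ind (V - (nbhd V E u \<union> nbhd V E v)) E - GF v) \<Longrightarrow>
      hh v p \<in> realization (Ind (V - (nbhd V E u \<union> nbhd V E v)) E - GF v)"
    and h0: "\<And>v x. v \<in> nbhd V E u \<Longrightarrow> V - (nbhd V E u \<union> nbhd V E v) \<noteq> {} \<Longrightarrow> hh v (0, x) = x"
    and h1: "\<And>v x. v \<in> nbhd V E u \<Longrightarrow> V - (nbhd V E u \<union> nbhd V E v) \<noteq> {} \<Longrightarrow> hh v (1, x) = cc v"
    and cmem: "\<And>v. v \<in> nbhd V E u \<Longrightarrow> V - (nbhd V E u \<union> nbhd V E v) \<noteq> {} \<Longrightarrow>
      cc v \<in> realization (Ind (V - (nbhd V E u \<union> nbhd V E v)) E - GF v)"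
begin

definition GFall :: "'a set set" where
  "GFall = {{v} | v. v \<in> N \<and> H v = {}} \<union> {insert v \<sigma> | v \<sigma>. v \<in> N \<and> H v \<noteq> {} \<and> \<sigma> \<in> GF v}"

definition M :: "'a \<Rightarrow> 'a set set" where
  "M v = {\<tau> \<in> L v. insert v \<tau> \<notin> GFall}"

abbreviation "K' \<equiv> K - GFall"

lemma GF_L: "v \<in> N \<Longrightarrow> H v \<noteq> {} \<Longrightarrow> GF v \<subseteq> L v"
  using hyp[of v] by (auto simp: generating_faces_def maximal_faces_def)

lemma GFall_N: "\<sigma> \<in> GFall \<Longrightarrow> \<sigma> \<inter> N \<noteq> {}"
  by (auto simp: GFall_def)

lemma C_K': "\<sigma> \<in> K \<Longrightarrow> \<sigma> \<inter> N = {} \<Longrightarrow> \<sigma> \<in> K'"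
  using GFall_N by blast

lemma M_L: "\<tau> \<in> M v \<Longrightarrow> \<tau> \<in> L v"
  by (simp add: M_def)

lemma M_faces:
  assumes "v \<in> N" "\<tau> \<in> M v"
  shows "insert v \<tau> \<in> K'" "\<tau> \<in> K'" "insert u \<tau> \<in> K'" "finite \<tau>" "v \<notin> \<tau>" "\<tau> \<inter> N = {}"
proof -
  have t: "\<tau> \<in> L v" "insert v \<tau> \<notin> GFall" using assms(2) by (auto simp: M_def)
  show "insert v \<tau> \<in> K'" using L_ins_v[OF assms(1) t(1)] t(2) by simp
  show "\<tau> \<in> K'" using C_K'[OF L_K[OF t(1)] L_N(1)[OF assms(1) t(1)]] .
  show "insert u \<tau> \<in> K'" using C_K'[OF L_ins_u[OF assms(1) t(1)]] L_N(1)[OF assms(1) t(1)] uN by auto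
  show "finite \<tau>" using L_finite[OF t(1)] .
  show "v \<notin> \<tau>" "\<tau> \<inter> N = {}" using L_N[OF assms(1) t(1)] by auto
qed

lemma M_eq:
  assumes "v \<in> N" "M v \<noteq> {}"
  shows "H v \<noteq> {}" "M v = L v - GF v"
proof -
  show hv: "H v \<noteq> {}"
  proof
    assume e: "H v = {}"
    have "Ind {} E = {{}}" by (auto simp: Ind_iff)
    then have "L v = {{}}" by (simp only: e)
    moreover have "{v} \<in> GFall" using assms(1) e by (auto simp: GFall_def)
    ultimately show False using assms(2) by (auto simp: M_def)
  qed
  show "M v = L v - GF v"
  proof (intro set_eqI iffI)
    fix \<tau> assume t: "\<tau> \<in> M v"
    then have tl: "\<tau> \<in> L v" and ng: "insert v \<tau> \<notin> GFall" by (auto simp: M_def)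
    have "\<tau> \<notin> GF v"
    proof
      assume "\<tau> \<in> GF v"
      then have "insert v \<tau> \<in> GFall" using assms(1) hv unfolding GFall_def by blast
      then show False using ng by simp
    qed
    then show "\<tau> \<in> L v - GF v" using tl by simp
  next
    fix \<tau> assume t: "\<tau> \<in> L v - GF v"
    have vt: "v \<notin> \<tau>" "\<tau> \<inter> N = {}" using L_N[OF assms(1)] t by auto
    have "insert v \<tau> \<notin> GFall"
    proof
      assume "insert v \<tau> \<in> GFall"
      then consider w where "insert v \<tau> = {w}" "w \<in> N" "H w = {}"
        | w \<sigma> where "insert v \<tau> = insert w \<sigma>" "w \<in> N" "H w \<noteq> {}" "\<sigma> \<in> GF w"
        unfolding GFall_def by blast
      then show False
      proof cases
        case 1 then have "w = v" by auto
        then show False using 1 hv by simp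
      next
        case 2
        have "w \<in> insert v \<tau>" using 2(1) by auto
        then have wv: "w = v" using 2(2) vt by auto
        then have "\<sigma> \<in> L v" using GF_L[OF assms(1) hv] 2(4) by auto
        then have "v \<notin> \<sigma>" using L_N[OF assms(1)] by auto
        then have "\<tau> = \<sigma>" using 2(1) wv vt(1) by (metis insert_ident)
        then show False using t 2(4) wv by simp
      qed
    qed
    then show "\<tau> \<in> M v" using t by (simp add: M_def)
  qed
qed

lemma K'_cases:
  assumes "\<sigma> \<in> K'"
  shows "\<sigma> \<inter> N = {} \<or> (\<exists>v\<in>N. \<exists>\<tau>\<in>M v. \<sigma> = insert v \<tau>)"
  using face_cases[of \<sigma>] assms by (auto simp: M_def)

definition Cr :: "('a \<Rightarrow> real) set" where
  "Cr = (\<Union>\<sigma>\<in>{\<sigma>\<in>K. \<sigma> \<inter> N = {}}. smplx \<sigma>)"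

definition Sv :: "'a \<Rightarrow> ('a \<Rightarrow> real) set" where
  "Sv v = (\<Union>\<tau>\<in>M v. smplx (insert v \<tau>))"

lemma finK: "finite K"
proof -
  have "K \<subseteq> Pow V" by (auto simp: Ind_iff)
  then show ?thesis using finV finite_subset by blast
qed

lemma finM: "finite (M v)"
proof -
  have "M v \<subseteq> Pow V" by (auto simp: M_def Ind_iff)
  then show ?thesis using finV finite_subset by blast
qed

lemma closed_Cr: "closed Cr"
  unfolding Cr_def using finK K_finite by (intro closed_UN) (auto intro: closed_smplx)

lemma closed_Sv: "v \<in> N \<Longrightarrow> closed (Sv v)"
  unfolding Sv_def using finM M_faces(4) by (intro closed_UN) (auto intro: closed_smplx)

lemma real_K'_eq: "realization K' = Cr \<union> (\<Union>v\<in>N. Sv v)"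
proof (intro set_eqI iffI)
  fix f assume "f \<in> realization K'"
  then obtain \<sigma> where s: "\<sigma> \<in> K'" "f \<in> smplx \<sigma>" by (auto elim: in_realE)
  from K'_cases[OF s(1)] show "f \<in> Cr \<union> (\<Union>v\<in>N. Sv v)"
    using s by (auto simp: Cr_def Sv_def)
next
  fix f assume "f \<in> Cr \<union> (\<Union>v\<in>N. Sv v)"
  then show "f \<in> realization K'"
  proof
    assume "f \<in> Cr"
    then obtain \<sigma> where "\<sigma> \<in> K" "\<sigma> \<inter> N = {}" "f \<in> smplx \<sigma>" by (auto simp: Cr_def)
    then show ?thesis using C_K' K_finite by (auto intro: in_realI)
  next
    assume "f \<in> (\<Union>v\<in>N. Sv v)"
    then obtain v \<tau> where vt: "v \<in> N" "\<tau> \<in> M v" "f \<in> smplx (insert v \<tau>)" by (auto simp: Sv_def)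
    have "insert v \<tau> \<in> K'" "finite (insert v \<tau>)" using M_faces[OF vt(1,2)] by auto
    then show ?thesis using vt(3) by (intro in_realI)
  qed
qed

lemma Cr_zero: "f \<in> Cr \<Longrightarrow> w \<in> N \<Longrightarrow> f w = 0"
  by (auto simp: Cr_def dest: smplxD(2))

definition gg :: "('a \<Rightarrow> real) \<Rightarrow> 'a \<Rightarrow> real" where
  "gg f = (\<lambda>y. if y \<in> N then 0 else f y / (1 - nsum f))"

lemma cont_gg: "continuous_on {f. nsum f < 1} gg"
proof (rule cont_fun)
  fix y
  show "continuous_on {f. nsum f < 1} (\<lambda>f. gg f y)"
    unfolding gg_def nsum_def
    by (cases "y \<in> N") (auto intro!: continuous_intros)
qed

lemma Sv_facts:
  assumes "v \<in> N" "f \<in> Sv v"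
  obtains \<tau> where "\<tau> \<in> M v" "f \<in> smplx (insert v \<tau>)" "nsum f = f v" "0 \<le> f v" "f v \<le> 1"
    "\<And>w. w \<in> N \<Longrightarrow> w \<noteq> v \<Longrightarrow> f w = 0"
proof -
  obtain \<tau> where t: "\<tau> \<in> M v" "f \<in> smplx (insert v \<tau>)" using assms(2) by (auto simp: Sv_def)
  note B = caseB[OF assms(1) M_L[OF t(1)] t(2)]
  show ?thesis using that[OF t B(5) B(7) B(8) B(4)] by blast
qed

lemma gg_smplx:
  assumes "v \<in> N" "\<tau> \<in> M v" "f \<in> smplx (insert v \<tau>)" "f v < 1"
  shows "gg f \<in> smplx \<tau>"
proof (rule smplxI)
  note B = caseB[OF assms(1) M_L[OF assms(2)] assms(3)]
  show "0 \<le> gg f y" for y using B(10) assms(4) B(5) by (auto simp: gg_def)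
  show "gg f y = 0" if "y \<notin> \<tau>" for y
  proof (cases "y \<in> N")
    case False then have "y \<noteq> v" using assms(1) by auto
    then show ?thesis using that False B(9) by (simp add: gg_def)
  qed (simp add: gg_def)
  have "sum (gg f) \<tau> = (\<Sum>y\<in>\<tau>. f y / (1 - f v))"
    using B(3,5) by (intro sum.cong) (auto simp: gg_def)
  also have "\<dots> = sum f \<tau> / (1 - f v)" by (simp add: sum_divide_distrib)
  also have "\<dots> = 1" using B(6) assms(4) by simp
  finally show "sum (gg f) \<tau> = 1" .
qed

lemma gg_C: "(\<And>w. w \<in> N \<Longrightarrow> f w = 0) \<Longrightarrow> gg f = f"
  by (auto simp: gg_def nsum_def)

lemma M_hv:
  assumes "v \<in> N" "\<tau> \<in> M v"
  shows "H v \<noteq> {}" "realization (M v) = realization (L v - GF v)"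
proof -
  have ne: "M v \<noteq> {}" using assms(2) by auto
  show "H v \<noteq> {}" by (rule M_eq(1)[OF assms(1) ne])
  have "M v = L v - GF v" by (rule M_eq(2)[OF assms(1) ne])
  then show "realization (M v) = realization (L v - GF v)" by simp
qed

lemma hh_props:
  assumes "v \<in> N" "\<tau> \<in> M v"
  shows "continuous_on ({0..1} \<times> realization (M v)) (hh v)"
    "\<And>p. p \<in> {0..1} \<times> realization (M v) \<Longrightarrow> hh v p \<in> realization (M v)"
    "\<And>x. hh v (0, x) = x" "\<And>x. hh v (1, x) = cc v" "cc v \<in> realization (M v)"
  using M_hv[OF assms] hcont[OF assms(1)] himg[OF assms(1)] h0[OF assms(1)] h1[OF assms(1)] cmem[OF assms(1)]
  by auto

lemma real_M: "\<tau> \<in> M v \<Longrightarrow> f \<in> smplx \<tau> \<Longrightarrow> f \<in> realization (M v)"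
  using M_L L_finite by (blast intro: in_realI)

lemma real_M_E: "k \<in> realization (M v) \<Longrightarrow> \<exists>\<rho>\<in>M v. k \<in> smplx \<rho>"
  by (auto elim: in_realE)

end

context gr2
begin

definition vsel :: "('a \<Rightarrow> real) \<Rightarrow> 'a" where
  "vsel f = (SOME v. v \<in> N \<and> f v \<noteq> 0)"

definition Fv :: "'a \<Rightarrow> real \<Rightarrow> ('a \<Rightarrow> real) \<Rightarrow> 'a \<Rightarrow> real" where
  "Fv v s f = (if f v \<le> 1/2 then (\<lambda>y. 2 * f v * delta v y + (1 - 2 * f v) * hh v (2 * f v * s, gg f) y)
     else delta v)"

definition Hm :: "real \<times> ('a \<Rightarrow> real) \<Rightarrow> 'a \<Rightarrow> real" where
  "Hm p = (if (\<forall>w\<in>N. snd p w = 0) then snd p else Fv (vsel (snd p)) (fst p) (snd p))"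

definition FR :: "'a \<Rightarrow> ('a \<Rightarrow> real) \<Rightarrow> 'a \<Rightarrow> real" where
  "FR v f = (if f v \<le> 1/2 then hh v (2 * f v, gg f) else cc v)"

definition Rm :: "('a \<Rightarrow> real) \<Rightarrow> 'a \<Rightarrow> real" where
  "Rm f = (if (\<forall>w\<in>N. f w = 0) then f else FR (vsel f) f)"

lemma vsel_eq:
  assumes "v \<in> N" "f \<in> Sv v" "f v \<noteq> 0"
  shows "vsel f = v"
proof -
  obtain \<tau> where t: "\<And>w. w \<in> N \<Longrightarrow> w \<noteq> v \<Longrightarrow> f w = 0"
    using Sv_facts[OF assms(1,2)] by blast
  show ?thesis unfolding vsel_def
    by (rule some_equality) (use assms t in auto)
qed

lemma Hm_C: "snd p \<in> Cr \<Longrightarrow> Hm p = snd p"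
  using Cr_zero by (auto simp: Hm_def)

lemma Rm_C: "f \<in> Cr \<Longrightarrow> Rm f = f"
  using Cr_zero by (auto simp: Rm_def)

lemma Hm_S:
  assumes "v \<in> N" "snd p \<in> Sv v"
  shows "Hm p = Fv v (fst p) (snd p)"
proof -
  obtain \<tau> where t: "\<tau> \<in> M v" "nsum (snd p) = snd p v" "\<And>w. w \<in> N \<Longrightarrow> w \<noteq> v \<Longrightarrow> snd p w = 0"
    using Sv_facts[OF assms] by blast
  show ?thesis
  proof (cases "snd p v = 0")
    case True
    have z: "snd p w = 0" if "w \<in> N" for w using t(3)[OF that] True by (cases "w = v") auto
    have "Fv v (fst p) (snd p) = gg (snd p)"
      using True hh_props(3)[OF assms(1) t(1)] by (simp add: Fv_def)
    also have "\<dots> = snd p" using gg_C z by blast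
    finally show ?thesis using z by (simp add: Hm_def)
  next
    case False
    then show ?thesis using vsel_eq[OF assms False] assms(1) by (auto simp: Hm_def)
  qed
qed

lemma Rm_S:
  assumes "v \<in> N" "f \<in> Sv v"
  shows "Rm f = FR v f"
proof -
  obtain \<tau> where t: "\<tau> \<in> M v" "\<And>w. w \<in> N \<Longrightarrow> w \<noteq> v \<Longrightarrow> f w = 0"
    using Sv_facts[OF assms] by blast
  show ?thesis
  proof (cases "f v = 0")
    case True
    have z: "f w = 0" if "w \<in> N" for w using t(2)[OF that] True by (cases "w = v") auto
    have "FR v f = gg f"
      using True hh_props(3)[OF assms(1) t(1)] by (simp add: FR_def)
    also have "\<dots> = f" using gg_C z by blast
    finally show ?thesis using z by (simp add: Rm_def)
  next
    case False
    then show ?thesis using vsel_eq[OF assms False] assms(1) by (auto simp: Rm_def)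
  qed
qed

lemma gg_real:
  assumes "v \<in> N" "f \<in> Sv v" "f v \<le> 1/2"
  shows "gg f \<in> realization (M v)" "nsum f < 1"
proof -
  obtain \<tau> where t: "\<tau> \<in> M v" "f \<in> smplx (insert v \<tau>)" "nsum f = f v"
    using Sv_facts[OF assms(1,2)] by blast
  show "gg f \<in> realization (M v)" using real_M[OF t(1) gg_smplx[OF assms(1) t(1,2)]] assms(3) by simp
  show "nsum f < 1" using t(3) assms(3) by simp
qed

lemma Fv_mem:
  assumes "v \<in> N" "f \<in> Sv v" "0 \<le> s" "s \<le> 1"
  shows "\<exists>\<rho>\<in>M v. Fv v s f \<in> smplx (insert v \<rho>)"
proof -
  obtain \<tau> where t: "\<tau> \<in> M v" "f \<in> smplx (insert v \<tau>)" "0 \<le> f v"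
    using Sv_facts[OF assms(1,2)] by blast
  show ?thesis
  proof (cases "f v \<le> 1/2")
    case True
    have r: "2 * f v * s \<in> {0..1}"
    proof -
      have "2 * f v * s \<le> 2 * f v * 1" using t(3) assms(3,4) by (intro mult_left_mono) auto
      then show ?thesis using t(3) assms(3) True by auto
    qed
    have "hh v (2 * f v * s, gg f) \<in> realization (M v)"
      by (rule hh_props(2)[OF assms(1) t(1)]) (use r gg_real(1)[OF assms(1,2) True] in simp)
    then obtain \<rho> where rho: "\<rho> \<in> M v" "hh v (2 * f v * s, gg f) \<in> smplx \<rho>"
      using real_M_E by blast
    have "(\<lambda>y. 2 * f v * delta v y + (1 - 2 * f v) * hh v (2 * f v * s, gg f) y) \<in> smplx (insert v \<rho>)"
      by (rule comb_smplx[OF M_faces(5)[OF assms(1) rho(1)] M_faces(4)[OF assms(1) rho(1)] rho(2)])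
        (use t(3) True in auto)
    moreover have "Fv v s f = (\<lambda>y. 2 * f v * delta v y + (1 - 2 * f v) * hh v (2 * f v * s, gg f) y)"
      using True by (simp add: Fv_def)
    ultimately show ?thesis using rho(1) by auto
  next
    case False
    have "delta v \<in> smplx (insert v \<tau>)"
      by (rule smplx_mono[OF delta_smplx]) (use M_faces(4)[OF assms(1) t(1)] in auto)
    moreover have "Fv v s f = delta v" using False by (simp add: Fv_def)
    ultimately show ?thesis using t(1) by auto
  qed
qed

lemma Fv0_mem:
  assumes "v \<in> N" "\<tau> \<in> M v" "f \<in> smplx (insert v \<tau>)"
  shows "Fv v 0 f \<in> smplx (insert v \<tau>)"
proof -
  have f: "f \<in> Sv v" using assms by (auto simp: Sv_def)
  note B = caseB[OF assms(1) M_L[OF assms(2)] assms(3)]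
  show ?thesis
  proof (cases "f v \<le> 1/2")
    case True
    have "gg f \<in> smplx \<tau>" using gg_smplx[OF assms] True by simp
    then have "(\<lambda>y. 2 * f v * delta v y + (1 - 2 * f v) * gg f y) \<in> smplx (insert v \<tau>)"
      by (rule comb_smplx[OF M_faces(5)[OF assms(1,2)] M_faces(4)[OF assms(1,2)]]) (use B(7) True in auto)
    then show ?thesis using True hh_props(3)[OF assms(1,2)] by (simp add: Fv_def)
  next
    case False
    have "delta v \<in> smplx (insert v \<tau>)"
      by (rule smplx_mono[OF delta_smplx]) (use M_faces(4)[OF assms(1,2)] in auto)
    moreover have "Fv v 0 f = delta v" using False by (simp add: Fv_def)
    ultimately show ?thesis by simp
  qed
qed

lemma FR_mem:
  assumes "v \<in> N" "f \<in> Sv v"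
  shows "\<exists>\<rho>\<in>M v. FR v f \<in> smplx \<rho> \<and> Fv v 1 f \<in> smplx (insert v \<rho>)"
proof -
  obtain \<tau> where t: "\<tau> \<in> M v" "f \<in> smplx (insert v \<tau>)" "0 \<le> f v"
    using Sv_facts[OF assms(1,2)] by blast
  show ?thesis
  proof (cases "f v \<le> 1/2")
    case True
    have r: "2 * f v \<in> {0..1}" using t(3) True by auto
    have "hh v (2 * f v, gg f) \<in> realization (M v)"
      by (rule hh_props(2)[OF assms(1) t(1)]) (use r gg_real(1)[OF assms(1,2) True] in simp)
    then obtain \<rho> where rho: "\<rho> \<in> M v" "hh v (2 * f v, gg f) \<in> smplx \<rho>"
      using real_M_E by blast
    have "(\<lambda>y. 2 * f v * delta v y + (1 - 2 * f v) * hh v (2 * f v, gg f) y) \<in> smplx (insert v \<rho>)"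
      by (rule comb_smplx[OF M_faces(5)[OF assms(1) rho(1)] M_faces(4)[OF assms(1) rho(1)] rho(2)])
        (use t(3) True in auto)
    moreover have "Fv v 1 f = (\<lambda>y. 2 * f v * delta v y + (1 - 2 * f v) * hh v (2 * f v, gg f) y)"
      using True by (simp add: Fv_def)
    moreover have "FR v f = hh v (2 * f v, gg f)" using True by (simp add: FR_def)
    ultimately show ?thesis using rho by auto
  next
    case False
    obtain \<rho> where rho: "\<rho> \<in> M v" "cc v \<in> smplx \<rho>"
      using real_M_E[OF hh_props(5)[OF assms(1) t(1)]] by blast
    have "delta v \<in> smplx (insert v \<rho>)"
      by (rule smplx_mono[OF delta_smplx]) (use M_faces(4)[OF assms(1) rho(1)] in auto)
    moreover have "Fv v 1 f = delta v" "FR v f = cc v" using False by (simp_all add: Fv_def FR_def)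
    ultimately show ?thesis using rho by auto
  qed
qed

end

context gr2
begin

lemma cont_Fv:
  assumes "v \<in> N"
  shows "continuous_on ({0..1} \<times> Sv v) (\<lambda>p. Fv v (fst p) (snd p))"
proof (cases "M v = {}")
  case True
  then have "Sv v = {}" by (simp add: Sv_def)
  then show ?thesis by simp
next
  case False
  then obtain \<tau>0 where t0: "\<tau>0 \<in> M v" by blast
  let ?D = "{0..1::real} \<times> Sv v"
  let ?A = "\<lambda>p::real \<times> ('a \<Rightarrow> real). (\<lambda>y. 2 * snd p v * delta v y + (1 - 2 * snd p v) * hh v (2 * snd p v * fst p, gg (snd p)) y)"
  have eq: "(\<lambda>p. Fv v (fst p) (snd p)) = (\<lambda>p. if snd p v \<le> 1/2 then ?A p else delta v)"
    by (simp add: Fv_def fun_eq_iff)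
  have hc: "continuous_on ({0..1} \<times> realization (M v)) (hh v)" using hh_props(1)[OF assms t0] .
  let ?P = "{p \<in> ?D. snd p v \<le> 1/2}"
  have gc: "continuous_on ?P (\<lambda>p. gg (snd p))"
  proof (rule continuous_on_compose2[OF cont_gg])
    show "continuous_on ?P snd" by (intro continuous_intros)
    show "snd ` ?P \<subseteq> {f. nsum f < 1}" using gg_real(2)[OF assms] by auto
  qed
  have sv: "continuous_on ?P (\<lambda>p. snd p v)" by (rule cont_coord) (intro continuous_intros)
  have pc: "continuous_on ?P (\<lambda>p. (2 * snd p v * fst p, gg (snd p)))"
    by (rule continuous_on_Pair) (intro continuous_intros sv, rule gc)
  have pimg: "(\<lambda>p. (2 * snd p v * fst p, gg (snd p))) ` ?P \<subseteq> {0..1} \<times> realization (M v)"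
  proof (rule image_subsetI)
    fix p assume p: "p \<in> ?P"
    obtain s f where pe: "p = (s, f)" by fastforce
    have sf: "(s, f) \<in> ?D" "f v \<le> 1/2" using p pe by auto
    then have f: "f \<in> Sv v" and s: "0 \<le> s" "s \<le> 1" by auto
    obtain \<tau> where "0 \<le> f v" using Sv_facts[OF assms f] by blast
    moreover have "2 * f v * s \<le> 2 * f v * 1" using \<open>0 \<le> f v\<close> s by (intro mult_left_mono) auto
    ultimately have "2 * f v * s \<in> {0..1}" using s sf(2) by auto
    then show "(2 * snd p v * fst p, gg (snd p)) \<in> {0..1} \<times> realization (M v)"
      using gg_real(1)[OF assms f sf(2)] pe by simp
  qed
  have hcomp: "continuous_on ?P (\<lambda>p. hh v (2 * snd p v * fst p, gg (snd p)))"
    by (rule continuous_on_compose2[OF hc pc pimg])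
  have Ac: "continuous_on ?P ?A"
  proof (rule cont_fun)
    fix y
    show "continuous_on ?P (\<lambda>p. ?A p y)"
      by (intro continuous_intros cont_coord[OF hcomp] sv)
  qed
  have "continuous_on ?D (\<lambda>p. if snd p v \<le> 1/2 then ?A p else delta v)"
  proof (rule continuous_on_cases_le)
    show "continuous_on ?P ?A" by (rule Ac)
    show "continuous_on {p \<in> ?D. 1/2 \<le> snd p v} (\<lambda>p. delta v)" by (rule continuous_on_const)
    show "continuous_on ?D (\<lambda>p. snd p v)" by (rule cont_coord) (intro continuous_intros)
    show "?A p = delta v" if "p \<in> ?D" "snd p v = 1/2" for p
    proof -
      have "2 * snd p v = 1" using that by simp
      then show ?thesis by (simp add: fun_eq_iff)
    qed
  qed
  then show ?thesis by (rule continuous_on_eq) (simp add: Fv_def)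
qed

lemma cont_FR:
  assumes "v \<in> N"
  shows "continuous_on (Sv v) (FR v)"
proof (cases "M v = {}")
  case True
  then have "Sv v = {}" by (simp add: Sv_def)
  then show ?thesis by simp
next
  case False
  then obtain \<tau>0 where t0: "\<tau>0 \<in> M v" by blast
  let ?D = "Sv v"
  have eq: "FR v = (\<lambda>f. if f v \<le> 1/2 then hh v (2 * f v, gg f) else cc v)"
    by (simp add: FR_def fun_eq_iff)
  have hc: "continuous_on ({0..1} \<times> realization (M v)) (hh v)" using hh_props(1)[OF assms t0] .
  let ?P = "{f \<in> ?D. f v \<le> 1/2}"
  have gc: "continuous_on ?P gg"
    by (rule continuous_on_subset[OF cont_gg]) (use gg_real(2)[OF assms] in auto)
  have pc: "continuous_on ?P (\<lambda>f. (2 * f v, gg f))"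
    by (rule continuous_on_Pair) (intro continuous_intros, rule gc)
  have pimg: "(\<lambda>f. (2 * f v, gg f)) ` ?P \<subseteq> {0..1} \<times> realization (M v)"
  proof (rule image_subsetI)
    fix f assume "f \<in> ?P"
    then have f: "f \<in> Sv v" "f v \<le> 1/2" by auto
    obtain \<tau> where "0 \<le> f v" using Sv_facts[OF assms f(1)] by blast
    then show "(2 * f v, gg f) \<in> {0..1} \<times> realization (M v)"
      using gg_real(1)[OF assms f] f(2) by simp
  qed
  have "continuous_on ?D (\<lambda>f. if f v \<le> 1/2 then hh v (2 * f v, gg f) else cc v)"
  proof (rule continuous_on_cases_le)
    show "continuous_on ?P (\<lambda>f. hh v (2 * f v, gg f))"
      by (rule continuous_on_compose2[OF hc pc pimg])
    show "continuous_on {f \<in> ?D. 1/2 \<le> f v} (\<lambda>f. cc v)" by (rule continuous_on_const)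
    show "continuous_on ?D (\<lambda>f. f v)" by (intro continuous_intros)
    show "hh v (2 * f v, gg f) = cc v" if "f \<in> ?D" "f v = 1/2" for f
    proof -
      have "2 * f v = 1" using that by simp
      then show ?thesis using hh_props(4)[OF assms t0] by simp
    qed
  qed
  then show ?thesis by (rule continuous_on_eq) (simp add: FR_def)
qed

lemma cont_Hm: "continuous_on ({0..1} \<times> realization K') Hm"
proof -
  have dom: "{0..1} \<times> realization K' = ({0..1} \<times> Cr) \<union> (\<Union>v\<in>N. {0..1} \<times> Sv v)"
    unfolding real_K'_eq by auto
  have c1: "continuous_on ({0..1} \<times> Cr) Hm"
  proof (rule continuous_on_eq)
    show "continuous_on ({0..1} \<times> Cr) snd" by (intro continuous_intros)
  qed (auto simp: Hm_C)
  have c2: "continuous_on (\<Union>v\<in>N. {0..1} \<times> Sv v) Hm"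
  proof (rule continuous_on_closed_Union)
    show "finite N" by (rule finN)
    show "closed ({0..1::real} \<times> Sv v)" if "v \<in> N" for v
      using closed_Sv[OF that] by (intro closed_Times) auto
    show "continuous_on ({0..1} \<times> Sv v) Hm" if "v \<in> N" for v
      by (rule continuous_on_eq[OF cont_Fv[OF that]]) (use Hm_S[OF that] in auto)
  qed
  have "continuous_on (({0..1} \<times> Cr) \<union> (\<Union>v\<in>N. {0..1} \<times> Sv v)) Hm"
  proof (rule continuous_on_closed_Un[OF _ _ c1 c2])
    show "closed ({0..1::real} \<times> Cr)" using closed_Cr by (intro closed_Times) auto
    show "closed (\<Union>v\<in>N. {0..1::real} \<times> Sv v)"
      using finN closed_Sv by (intro closed_UN) (auto intro: closed_Times)
  qed
  then show ?thesis by (simp only: dom)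
qed

lemma cont_Rm: "continuous_on (realization K') Rm"
proof -
  have c1: "continuous_on Cr Rm"
    by (rule continuous_on_eq[OF continuous_on_id]) (auto simp: Rm_C)
  have c2: "continuous_on (\<Union>v\<in>N. Sv v) Rm"
  proof (rule continuous_on_closed_Union)
    show "finite N" by (rule finN)
    show "closed (Sv v)" if "v \<in> N" for v using closed_Sv[OF that] .
    show "continuous_on (Sv v) Rm" if "v \<in> N" for v
      by (rule continuous_on_eq[OF cont_FR[OF that]]) (use Rm_S[OF that] in auto)
  qed
  have "continuous_on (Cr \<union> (\<Union>v\<in>N. Sv v)) Rm"
    by (rule continuous_on_closed_Un[OF closed_Cr _ c1 c2]) (use finN closed_Sv in auto)
  then show ?thesis unfolding real_K'_eq .
qed

lemma real_K'_cases:
  assumes "f \<in> realization K'"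
  obtains (C) \<sigma> where "\<sigma> \<in> K" "\<sigma> \<inter> N = {}" "f \<in> smplx \<sigma>" "f \<in> Cr"
    | (S) v \<tau> where "v \<in> N" "\<tau> \<in> M v" "f \<in> smplx (insert v \<tau>)" "f \<in> Sv v"
proof -
  have "f \<in> Cr \<union> (\<Union>v\<in>N. Sv v)" using assms unfolding real_K'_eq .
  then show ?thesis
  proof
    assume f: "f \<in> Cr"
    then obtain \<sigma> where "\<sigma> \<in> K" "\<sigma> \<inter> N = {}" "f \<in> smplx \<sigma>" by (auto simp: Cr_def)
    then show ?thesis using C f by blast
  next
    assume "f \<in> (\<Union>v\<in>N. Sv v)"
    then obtain v where v: "v \<in> N" "f \<in> Sv v" by blast
    then obtain \<tau> where "\<tau> \<in> M v" "f \<in> smplx (insert v \<tau>)" by (auto simp: Sv_def)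
    then show ?thesis using S v by blast
  qed
qed

lemma Hm_real: "p \<in> {0..1} \<times> realization K' \<Longrightarrow> Hm p \<in> realization K'"
proof -
  assume p: "p \<in> {0..1} \<times> realization K'"
  then have s: "0 \<le> fst p" "fst p \<le> 1" and f: "snd p \<in> realization K'" by auto
  show ?thesis using f
  proof (cases rule: real_K'_cases)
    case (C \<sigma>) then show ?thesis using Hm_C f by simp
  next
    case (S v \<tau>)
    obtain \<rho> where rho: "\<rho> \<in> M v" "Fv v (fst p) (snd p) \<in> smplx (insert v \<rho>)"
      using Fv_mem[OF S(1,4) s] by blast
    have "insert v \<rho> \<in> K'" "finite (insert v \<rho>)" using M_faces[OF S(1) rho(1)] by auto
    then show ?thesis using rho(2) Hm_S[OF S(1,4)] by (auto intro: in_realI)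
  qed
qed

lemma delta_u_real: "delta u \<in> realization K'"
proof -
  have "{u} \<in> K'" using C_K'[OF singleton_u_K] uN by auto
  then show ?thesis by (rule in_realI) (auto simp: delta_smplx)
qed

theorem part2_contr: "contractible_cx K'"
proof -
  let ?P = "\<lambda>f. Hm (0, f)" and ?Q = "\<lambda>f. Hm (1, f)"
  have cP: "continuous_on (realization K') ?P"
    by (rule continuous_on_compose2[OF cont_Hm]) (auto intro!: continuous_intros)
  have cQ: "continuous_on (realization K') ?Q"
    by (rule continuous_on_compose2[OF cont_Hm]) (auto intro!: continuous_intros)
  have H1: "homotopic_with (\<lambda>_. True) (geom K') (geom K') id ?P"
  proof (rule straight_line_K)
    show "continuous_on (realization K') id" by (rule continuous_on_id')
    show "continuous_on (realization K') ?P" by (rule cP)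
    fix f assume f: "f \<in> realization K'"
    then show "\<exists>\<sigma>\<in>K'. finite \<sigma> \<and> id f \<in> smplx \<sigma> \<and> ?P f \<in> smplx \<sigma>"
    proof (cases rule: real_K'_cases)
      case (C \<sigma>) then show ?thesis using Hm_C[of "(0, f)"] C_K' K_finite by auto
    next
      case (S v \<tau>)
      have "?P f \<in> smplx (insert v \<tau>)" using Hm_S[of v "(0, f)"] S Fv0_mem[OF S(1-3)] by simp
      moreover have "insert v \<tau> \<in> K'" "finite (insert v \<tau>)" using M_faces[OF S(1,2)] by auto
      ultimately show ?thesis using S(3) by auto
    qed
  qed
  have H2: "homotopic_with (\<lambda>_. True) (geom K') (geom K') ?P ?Q"
  proof -
    have "homotopic_with (\<lambda>_. True) (top_of_set (realization K')) (top_of_set (realization K')) ?P ?Q"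
      by (rule hom_canon[OF cont_Hm Hm_real]) auto
    then show ?thesis by (simp add: geom_def)
  qed
  have H3: "homotopic_with (\<lambda>_. True) (geom K') (geom K') ?Q Rm"
  proof (rule straight_line_K)
    show "continuous_on (realization K') ?Q" by (rule cQ)
    show "continuous_on (realization K') Rm" by (rule cont_Rm)
    fix f assume f: "f \<in> realization K'"
    then show "\<exists>\<sigma>\<in>K'. finite \<sigma> \<and> ?Q f \<in> smplx \<sigma> \<and> Rm f \<in> smplx \<sigma>"
    proof (cases rule: real_K'_cases)
      case (C \<sigma>) then show ?thesis using Hm_C[of "(1, f)"] Rm_C C_K' K_finite by auto
    next
      case (S v \<tau>)
      obtain \<rho> where rho: "\<rho> \<in> M v" "FR v f \<in> smplx \<rho>" "Fv v 1 f \<in> smplx (insert v \<rho>)"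
        using FR_mem[OF S(1,4)] by blast
      have fin: "finite (insert v \<rho>)" using M_faces[OF S(1) rho(1)] by auto
      have "Rm f \<in> smplx (insert v \<rho>)" using Rm_S[OF S(1,4)] smplx_mono[OF rho(2) _ fin] by auto
      moreover have "?Q f \<in> smplx (insert v \<rho>)" using Hm_S[of v "(1, f)"] S rho(3) by simp
      moreover have "insert v \<rho> \<in> K'" using M_faces[OF S(1) rho(1)] by auto
      ultimately show ?thesis using fin by auto
    qed
  qed
  have H4: "homotopic_with (\<lambda>_. True) (geom K') (geom K') Rm (\<lambda>_. delta u)"
  proof (rule straight_line_K)
    show "continuous_on (realization K') Rm" by (rule cont_Rm)
    show "continuous_on (realization K') (\<lambda>_. delta u)" by (rule continuous_on_const)
    fix f assume f: "f \<in> realization K'"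
    have du: "delta u \<in> smplx (insert u \<rho>)" if "finite \<rho>" for \<rho>
      by (rule smplx_mono[OF delta_smplx]) (use that in auto)
    from f show "\<exists>\<sigma>\<in>K'. finite \<sigma> \<and> Rm f \<in> smplx \<sigma> \<and> delta u \<in> smplx \<sigma>"
    proof (cases rule: real_K'_cases)
      case (C \<sigma>)
      have fin: "finite (insert u \<sigma>)" using K_finite[OF C(1)] by simp
      have "insert u \<sigma> \<in> K'" using C_K'[OF cone_face[OF C(1,2)]] C(2) uN by auto
      moreover have "Rm f \<in> smplx (insert u \<sigma>)" using Rm_C[OF C(4)] smplx_mono[OF C(3) _ fin] by auto
      ultimately show ?thesis using du K_finite[OF C(1)] fin by blast
    next
      case (S v \<tau>)
      obtain \<rho> where rho: "\<rho> \<in> M v" "FR v f \<in> smplx \<rho>"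
        using FR_mem[OF S(1,4)] by blast
      have fin: "finite (insert u \<rho>)" using M_faces[OF S(1) rho(1)] by auto
      have "Rm f \<in> smplx (insert u \<rho>)" using Rm_S[OF S(1,4)] smplx_mono[OF rho(2) _ fin] by auto
      moreover have "insert u \<rho> \<in> K'" using M_faces[OF S(1) rho(1)] by auto
      ultimately show ?thesis using du M_faces(4)[OF S(1) rho(1)] fin by blast
    qed
  qed
  have "homotopic_with (\<lambda>_. True) (geom K') (geom K') id (\<lambda>_. delta u)"
    using homotopic_with_trans[OF homotopic_with_trans[OF homotopic_with_trans[OF H1 H2] H3] H4] .
  then have "contractible_space (geom K')"
    unfolding contractible_space_def by blast
  moreover have "realization K' \<noteq> {}" using delta_u_real by blast
  ultimately show ?thesis by (simp add: contractible_cx_def)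
qed

end

context gr2
begin

lemma GFall_max: "GFall \<subseteq> maximal_faces K"
proof
  fix \<sigma> assume "\<sigma> \<in> GFall"
  then consider v where "\<sigma> = {v}" "v \<in> N" "H v = {}"
    | v \<rho> where "\<sigma> = insert v \<rho>" "v \<in> N" "H v \<noteq> {}" "\<rho> \<in> GF v"
    unfolding GFall_def by blast
  then show "\<sigma> \<in> maximal_faces K"
  proof cases
    case 1
    have sK: "{v} \<in> K" using N_E[OF 1(2)] irrE by (auto simp: Ind_iff)
    have "\<tau> = {v}" if t: "\<tau> \<in> K" "{v} \<subseteq> \<tau>" for \<tau>
    proof (rule ccontr)
      assume "\<tau> \<noteq> {v}"
      then obtain x where x: "x \<in> \<tau>" "x \<noteq> v" using t(2) by blast
      have tv: "\<tau> \<subseteq> V" "\<forall>a\<in>\<tau>. \<forall>b\<in>\<tau>. \<not> E a b" using t(1) by (auto simp: Ind_iff)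
      have nE: "\<not> E v x" using tv(2) x(1) t(2) by blast
      have "x \<notin> N" using cliq[of v x] 1(2) x(2) nE by blast
      moreover have "x \<notin> nbhd V E v" using nE by (simp add: nbhd_def)
      ultimately have "x \<in> H v" using tv(1) x(1) by blast
      then show False using 1(3) by blast
    qed
    then show ?thesis unfolding maximal_faces_def using sK 1(1) by blast
  next
    case 2
    have mx: "\<rho> \<in> maximal_faces (L v)" using hyp[OF 2(2,3)] 2(4) by (auto simp: generating_faces_def)
    then have rL: "\<rho> \<in> L v" by (simp add: maximal_faces_def)
    have sK: "insert v \<rho> \<in> K" using L_ins_v[OF 2(2) rL] .
    have vr: "v \<notin> \<rho>" using L_N(2)[OF 2(2) rL] .
    have "\<tau> = insert v \<rho>" if t: "\<tau> \<in> K" "insert v \<rho> \<subseteq> \<tau>" for \<tau>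
    proof -
      have "v \<in> \<tau>" using t(2) by blast
      then have "\<tau> \<inter> N \<noteq> {}" using 2(2) by blast
      then obtain w \<rho>' where w: "w \<in> N" "\<rho>' \<in> L w" "\<tau> = insert w \<rho>'" using face_cases[OF t(1)] by blast
      have "w = v"
      proof (rule ccontr)
        assume "w \<noteq> v"
        then have "v \<in> \<rho>'" using \<open>v \<in> \<tau>\<close> w(3) by blast
        then show False using L_N(1)[OF w(1,2)] 2(2) by blast
      qed
      then have rl: "\<rho>' \<in> L v" and te: "\<tau> = insert v \<rho>'" using w by auto
      have "\<rho> \<subseteq> \<rho>'" using t(2) te vr by blast
      then have "\<rho>' = \<rho>" using mx rl by (auto simp: maximal_faces_def)
      then show ?thesis using te by simp
    qed
    then show ?thesis unfolding maximal_faces_def using sK 2(1) by blast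
  qed
qed

theorem part2: "generating_faces K GFall"
  unfolding generating_faces_def using GFall_max part2_contr by blast

end

lemma contr_ex:
  assumes "contractible_cx X"
  shows "\<exists>h c. continuous_on ({0..1::real} \<times> realization X) h \<and>
     (\<forall>p\<in>{0..1} \<times> realization X. h p \<in> realization X) \<and>
     (\<forall>x. h (0, x) = x) \<and> (\<forall>x. h (1, x) = c) \<and> c \<in> realization X"
proof -
  have ne: "realization X \<noteq> {}" and cs: "contractible_space (geom X)"
    using assms by (auto simp: contractible_cx_def)
  obtain a where hw: "homotopic_with (\<lambda>x. True) (geom X) (geom X) id (\<lambda>x. a)"
    using cs by (auto simp: contractible_space_def)
  have "\<exists>h. continuous_map (prod_topology (top_of_set {0..1::real}) (geom X)) (geom X) h \<and>
      (\<forall>x. h (0, x) = id x) \<and> (\<forall>x. h (1, x) = a) \<and> (\<forall>t\<in>{0..1::real}. True)"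
    using hw unfolding homotopic_with_def .
  then obtain h where hh: "continuous_map (prod_topology (top_of_set {0..1::real}) (geom X)) (geom X) h \<and>
      (\<forall>x. h (0, x) = id x) \<and> (\<forall>x. h (1, x) = a) \<and> (\<forall>t\<in>{0..1::real}. True)"
    by (rule exE)
  have h: "continuous_map (prod_topology (top_of_set {0..1::real}) (geom X)) (geom X) h"
    "\<forall>x. h (0, x) = id x" "\<forall>x. h (1, x) = a"
    using hh by simp_all
  have hc: "continuous_on ({0..1} \<times> realization X) h" "h \<in> ({0..1} \<times> realization X) \<rightarrow> realization X"
    using h(1) by (simp_all add: geom_def)
  obtain x0 where x0: "x0 \<in> realization X" using ne by blast
  have "(1::real, x0) \<in> {0..1} \<times> realization X" using x0 by simp
  then have "h (1, x0) \<in> realization X" using hc(2) by (rule funcset_mem[rotated])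
  then have "a \<in> realization X" using h(3) by simp
  then show ?thesis using hc h by (intro exI[of _ h] exI[of _ a]) auto
qed

theorem theorem3p7:
  fixes V :: "'a set" and E :: "'a \<Rightarrow> 'a \<Rightarrow> bool" and u :: 'a
    and GF :: "'a \<Rightarrow> 'a set set"
  assumes "finite V"
    and "\<And>x y. E x y \<Longrightarrow> E y x"
    and "\<And>x. \<not> E x x"
    and "u \<in> V"
    and "\<And>x y. x \<in> nbhd V E u \<Longrightarrow> y \<in> nbhd V E u \<Longrightarrow> x \<noteq> y \<Longrightarrow> E x y"
  shows "(geom (Ind V E)) homotopy_equivalent_space
           (geom (wedge_cx (nbhd V E u)
              (\<lambda>v. susp_cx (Ind (V - (nbhd V E u \<union> nbhd V E v)) E)) (\<lambda>v. Inr True)))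
       \<and> ((\<forall>v\<in>nbhd V E u. V - (nbhd V E u \<union> nbhd V E v) \<noteq> {} \<longrightarrow>
              generating_faces (Ind (V - (nbhd V E u \<union> nbhd V E v)) E) (GF v))
          \<longrightarrow> generating_faces (Ind V E)
               ({ {v} | v. v \<in> nbhd V E u \<and> V - (nbhd V E u \<union> nbhd V E v) = {}}
                \<union> {insert v \<sigma> | v \<sigma>. v \<in> nbhd V E u \<and> V - (nbhd V E u \<union> nbhd V E v) \<noteq> {}
                                     \<and> \<sigma> \<in> GF v}))"
proof
  interpret G: gr V E u using assms by unfold_locales
  show "(geom (Ind V E)) homotopy_equivalent_space
           (geom (wedge_cx (nbhd V E u)
              (\<lambda>v. susp_cx (Ind (V - (nbhd V E u \<union> nbhd V E v)) E)) (\<lambda>v. Inr True)))"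
    by (rule G.part1)
  show "(\<forall>v\<in>nbhd V E u. V - (nbhd V E u \<union> nbhd V E v) \<noteq> {} \<longrightarrow>
              generating_faces (Ind (V - (nbhd V E u \<union> nbhd V E v)) E) (GF v))
          \<longrightarrow> generating_faces (Ind V E)
               ({ {v} | v. v \<in> nbhd V E u \<and> V - (nbhd V E u \<union> nbhd V E v) = {}}
                \<union> {insert v \<sigma> | v \<sigma>. v \<in> nbhd V E u \<and> V - (nbhd V E u \<union> nbhd V E v) \<noteq> {}
                                     \<and> \<sigma> \<in> GF v})"
  proof
    assume hyp: "\<forall>v\<in>nbhd V E u. V - (nbhd V E u \<union> nbhd V E v) \<noteq> {} \<longrightarrow>
              generating_faces (Ind (V - (nbhd V E u \<union> nbhd V E v)) E) (GF v)"
    define RR where "RR v = realization (Ind (V - (nbhd V E u \<union> nbhd V E v)) E - GF v)" for v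
    define PP where "PP v h c \<longleftrightarrow> continuous_on ({0..1} \<times> RR v) h \<and>
     (\<forall>p\<in>{0..1} \<times> RR v. h p \<in> RR v) \<and>
     (\<forall>x. h (0, x) = x) \<and> (\<forall>x. h (1, x) = c) \<and> c \<in> RR v" for v and h :: "real \<times> ('a \<Rightarrow> real) \<Rightarrow> 'a \<Rightarrow> real" and c
    have "\<forall>v. \<exists>hc. (v \<in> nbhd V E u \<and> V - (nbhd V E u \<union> nbhd V E v) \<noteq> {}) \<longrightarrow> PP v (fst hc) (snd hc)"
    proof
      fix v
      show "\<exists>hc. (v \<in> nbhd V E u \<and> V - (nbhd V E u \<union> nbhd V E v) \<noteq> {}) \<longrightarrow> PP v (fst hc) (snd hc)"
      proof (cases "v \<in> nbhd V E u \<and> V - (nbhd V E u \<union> nbhd V E v) \<noteq> {}")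
        case True
        then have "contractible_cx (Ind (V - (nbhd V E u \<union> nbhd V E v)) E - GF v)"
          using hyp by (auto simp: generating_faces_def)
        from contr_ex[OF this] obtain h c where "PP v h c" unfolding PP_def RR_def by blast
        then show ?thesis by (intro exI[of _ "(h, c)"]) simp
      qed blast
    qed
    from choice[OF this] obtain F where
      F0: "\<forall>v. (v \<in> nbhd V E u \<and> V - (nbhd V E u \<union> nbhd V E v) \<noteq> {}) \<longrightarrow> PP v (fst (F v)) (snd (F v))"
      by blast
    have F: "PP v (fst (F v)) (snd (F v))" if "v \<in> nbhd V E u" "V - (nbhd V E u \<union> nbhd V E v) \<noteq> {}" for v
      using F0 that by blast
    interpret G2: gr2 V E u GF "\<lambda>v. fst (F v)" "\<lambda>v. snd (F v)"
    proof unfold_locales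
      fix v assume v: "v \<in> nbhd V E u" "V - (nbhd V E u \<union> nbhd V E v) \<noteq> {}"
      note P = F[OF v, unfolded PP_def RR_def]
      show "generating_faces (Ind (V - (nbhd V E u \<union> nbhd V E v)) E) (GF v)" using hyp v by blast
      show "continuous_on ({0..1} \<times> realization (Ind (V - (nbhd V E u \<union> nbhd V E v)) E - GF v)) (fst (F v))"
        using P by blast
      show "\<And>p. p \<in> {0..1} \<times> realization (Ind (V - (nbhd V E u \<union> nbhd V E v)) E - GF v) \<Longrightarrow>
           fst (F v) p \<in> realization (Ind (V - (nbhd V E u \<union> nbhd V E v)) E - GF v)"
        using P by blast
      show "\<And>x. fst (F v) (0, x) = x" using P by blast
      show "\<And>x. fst (F v) (1, x) = snd (F v)" using P by blast
      show "snd (F v) \<in> realization (Ind (V - (nbhd V E u \<union> nbhd V E v)) E - GF v)" using P by blast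
    qed
    show "generating_faces (Ind V E)
               ({ {v} | v. v \<in> nbhd V E u \<and> V - (nbhd V E u \<union> nbhd V E v) = {}}
                \<union> {insert v \<sigma> | v \<sigma>. v \<in> nbhd V E u \<and> V - (nbhd V E u \<union> nbhd V E v) \<noteq> {}
                                     \<and> \<sigma> \<in> GF v})"
      using G2.part2 unfolding G2.GFall_def .
  qed
qed

end
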